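(* For all integers $p\ge0$ and $r\ge1$, $$T(\{1\}_{p-1},\bar 1,\{1\}_{r-1},\bar 1)=\bar T(\{1\}_{r-1},p+1),$$ where by convention $(\{1\}_{-1},\bar 1)$ is the empty string (so for $p=0$ the left side is $T(\{1\}_{r-1},\bar 1)$).
   Context: $\{1\}_a$ denotes the sequence of $a$ ones. For positive integers $k_1,\dots,k_r$, some entries possibly marked with a bar, $T(\ldots):=2^r\sum_{0<n_1<\cdots<n_r}\frac{\prod_{j\text{ barred}}(-1)^{n_j}}{(2n_1-1)^{k_1}(2n_2-2)^{k_2}\cdots(2n_r-r)^{k_r}}$. $\bar T(k_1,\dots,k_r):=T(k_1,\dots,k_{r-1},\overline{k_r})$ (only the last entry barred). *)

theory Defs
  imports Complex_Main
begin

text \<open>An index entry is a pair (k, barred).\<close>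

fun Tpart :: "(nat \<times> bool) list \<Rightarrow> nat \<Rightarrow> nat \<Rightarrow> nat \<Rightarrow> real" where
  "Tpart [] j m N = 1"
| "Tpart ((k, b) # ks) j m N =
     (\<Sum>n\<in>{m<..N}. (if b then (-1) ^ n else 1) / (2 * real n - real j) ^ k
                     * Tpart ks (Suc j) n N)"

definition Tsum :: "(nat \<times> bool) list \<Rightarrow> nat \<Rightarrow> real" where
  "Tsum ks N = 2 ^ length ks * Tpart ks 1 0 N"

definition Tval :: "(nat \<times> bool) list \<Rightarrow> real" where
  "Tval ks = lim (Tsum ks)"

end

theory Submission
  imports Defs "HOL-Analysis.Analysis" "HOL-Real_Asymp.Real_Asymp"
begin


definition uu :: "real \<Rightarrow> real" where "uu x = (1 - x) / (1 + x)"

lemma uu_deriv: "x \<ge> 0 \<Longrightarrow> (uu has_real_derivative (- 2 / (1 + x)^2)) (at x within S)"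
  unfolding uu_def
  by (rule derivative_eq_intros refl | simp)+ (simp add: field_simps power2_eq_square)

lemma uu_cont: "continuous_on {0..1} uu"
  unfolding uu_def by (intro continuous_intros) auto

lemma uu_nonneg: "x \<in> {0..1} \<Longrightarrow> 0 \<le> uu x" by (auto simp: uu_def)
lemma uu_le1: "x \<in> {0..1} \<Longrightarrow> uu x \<le> 1" by (auto simp: uu_def)
lemma pos2: "0 < 1 + (x::real)^2" by (simp add: add_pos_nonneg)
lemma uu_le: assumes "x \<in> {0..1}" shows "uu x \<le> 1 - x"
proof -
  have x: "0 \<le> x" "x \<le> 1" using assms by auto
  have "0 \<le> (1-x)*x" using x by simp
  moreover have "(1-x)*(1+x) = (1-x) + (1-x)*x" by (simp add: algebra_simps)
  ultimately have "1 - x \<le> (1-x)*(1+x)" by linarith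
  then show ?thesis using x by (simp add: uu_def pos_divide_le_eq)
qed
lemma uu_1 [simp]: "uu 1 = 0" and uu_0 [simp]: "uu 0 = 1" by (auto simp: uu_def)
lemma x_le_1_uu: "x \<in> {0..1} \<Longrightarrow> x \<le> 1 - uu x"
  using uu_le by force

lemma intg: "continuous_on {0..1} g \<Longrightarrow> (\<lambda>x. x^a * uu x^b * g x) integrable_on {0..1}"
  by (intro integrable_continuous_real continuous_intros uu_cont) auto

definition PI :: "nat \<Rightarrow> nat \<Rightarrow> real" where "PI a b = integral {0..1} (\<lambda>x. x^a * uu x^b * 1)"
definition QI :: "nat \<Rightarrow> nat \<Rightarrow> real" where "QI a b = integral {0..1} (\<lambda>x. x^a * uu x^b * (2/(1+x)^2))"
definition KI :: "nat \<Rightarrow> nat \<Rightarrow> real" where "KI a b = integral {0..1} (\<lambda>x. x^a * uu x^b * (1/(1+x^2)))"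
definition CC :: "nat \<Rightarrow> nat \<Rightarrow> real" where "CC a b = (if a = 0 then 1 else real a * PI (a-1) b)"

lemma c1: "continuous_on {0..1} (\<lambda>x::real. 1::real)" by (intro continuous_intros)
lemma c2: "continuous_on {0..1} (\<lambda>x::real. 2/(1+x)^2)" by (intro continuous_intros) auto
lemma c3: "continuous_on {0..1} (\<lambda>x::real. 1/(1+x^2))"
  using pos2 by (intro continuous_intros) (metis less_irrefl)

lemma IP: "PI a b = integral {0..1} (\<lambda>x. x^a * uu x^b * 1)" by (simp add: PI_def)

lemma ibp: "((\<lambda>x. real a * x^(a-1) * uu x^(Suc b) - real (Suc b) * (x^a * uu x^b * (2/(1+x)^2)))
   has_integral (- (if a = 0 then 1 else 0))) {0..1}"
proof -
  have "((\<lambda>x. real a * x^(a-1) * uu x^(Suc b) - real (Suc b) * (x^a * uu x^b * (2/(1+x)^2)))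
     has_integral ((\<lambda>x. x^a * uu x ^ Suc b) 1 - (\<lambda>x. x^a * uu x ^ Suc b) 0)) {0..1}"
  proof (rule fundamental_theorem_of_calculus)
    fix x :: real assume x: "x \<in> {0..1}"
    have d: "((\<lambda>x. x^a * uu x ^ Suc b) has_real_derivative
       (real a * x^(a - Suc 0) * uu x ^ Suc b + real (Suc b) * (-2/(1+x)^2 * uu x ^ (Suc b - Suc 0)) * x^a)) (at x within {0..1})"
      by (rule DERIV_mult[OF DERIV_pow DERIV_power[OF uu_deriv]]) (use x in simp)
    have eq: "real a * x^(a - Suc 0) * uu x ^ Suc b + real (Suc b) * (-2/(1+x)^2 * uu x ^ (Suc b - Suc 0)) * x^a
       = real a * x^(a-1) * uu x^(Suc b) - real (Suc b) * (x^a * uu x^b * (2/(1+x)^2))"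
      by (simp add: algebra_simps)
    show "((\<lambda>x. x^a * uu x ^ Suc b) has_vector_derivative
       (real a * x^(a-1) * uu x^(Suc b) - real (Suc b) * (x^a * uu x^b * (2/(1+x)^2)))) (at x within {0..1})"
      using DERIV_cong[OF d eq] by (simp only: has_real_derivative_iff_has_vector_derivative)
  qed simp
  note X = this
  have E: "(\<lambda>x. x^a * uu x ^ Suc b) 1 - (\<lambda>x. x^a * uu x ^ Suc b) 0 = - (if a = 0 then 1 else 0)" by simp
  show ?thesis using X unfolding E .
qed

lemma CC_Suc: "CC a (Suc b) = real (Suc b) * QI a b"
proof -
  have i1: "(\<lambda>x. real a * x^(a-1) * uu x^(Suc b)) integrable_on {0..1}"
    using integrable_on_cmult_left[OF intg[OF c1, of "a-1" "Suc b"], of "real a"] by (simp add: mult.assoc)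
  have i2: "(\<lambda>x. real (Suc b) * (x^a * uu x^b * (2/(1+x)^2))) integrable_on {0..1}"
    using integrable_on_cmult_left[OF intg[OF c2, of a b], of "real (Suc b)"] by simp
  have "integral {0..1} (\<lambda>x. real a * x^(a-1) * uu x^(Suc b)) - integral {0..1} (\<lambda>x. real (Suc b) * (x^a * uu x^b * (2/(1+x)^2)))
       = - (if a = 0 then 1 else 0)"
    using ibp[of a b] integral_diff[OF i1 i2] by (simp add: integral_unique)
  moreover have "integral {0..1} (\<lambda>x. real a * x^(a-1) * uu x^(Suc b)) = real a * PI (a-1) (Suc b)"
    by (simp add: PI_def mult.assoc)
  moreover have "integral {0..1} (\<lambda>x. real (Suc b) * (x^a * uu x^b * (2/(1+x)^2))) = real (Suc b) * QI a b"
    using integral_mult[OF intg[OF c2, of a b], of "real (Suc b)"] by (simp only: QI_def)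
  ultimately show ?thesis by (auto simp: CC_def)
qed


lemma pow_int: "((\<lambda>x::real. x^n) has_integral 1/(real n+1)) {0..1}"
proof -
  have "((\<lambda>x::real. x^n) has_integral ((\<lambda>x. x^(Suc n)/(real n+1)) 1 - (\<lambda>x. x^(Suc n)/(real n+1)) 0)) {0..1}"
  proof (rule fundamental_theorem_of_calculus)
    fix x :: real assume x: "x \<in> {0..1}"
    show "((\<lambda>x. x^(Suc n)/(real n+1)) has_vector_derivative x^n) (at x within {0..1})"
      unfolding has_real_derivative_iff_has_vector_derivative[symmetric]
      by (rule DERIV_cong[OF DERIV_cdivide[OF DERIV_pow]]) (simp add: field_simps)
  qed simp
  then show ?thesis by simp
qed

lemma PI_0: "PI a 0 = 1/(real a+1)"
  using pow_int[of a] by (simp add: PI_def integral_unique)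

lemma CC_0 [simp]: "CC a 0 = 1"
  by (auto simp: CC_def PI_0 of_nat_diff)

lemma ig_nonneg: "x \<in> {0..1} \<Longrightarrow> 0 \<le> x^a * uu x^b"
  using uu_nonneg[of x] by (intro mult_nonneg_nonneg zero_le_power) auto
lemma PI_nonneg: "0 \<le> PI a b"
  unfolding PI_def
proof (rule integral_nonneg[OF intg[OF c1]])
  fix x :: real assume "x \<in> {0..1}"
  then show "0 \<le> x^a * uu x^b * 1" by (metis ig_nonneg mult_1_right)
qed
lemma QI_nonneg: "0 \<le> QI a b"
  unfolding QI_def
proof (rule integral_nonneg[OF intg[OF c2]])
  fix x :: real assume x: "x \<in> {0..1}"
  have "0 \<le> 2/(1+x)^2" using x by simp
  then show "0 \<le> x^a * uu x^b * (2/(1+x)^2)" by (rule mult_nonneg_nonneg[OF ig_nonneg[OF x]])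
qed
lemma KI_nonneg: "0 \<le> KI a b"
  unfolding KI_def
proof (rule integral_nonneg[OF intg[OF c3]])
  fix x :: real assume x: "x \<in> {0..1}"
  have "0 \<le> 1/(1+x^2)" by (rule divide_nonneg_pos[OF _ pos2]) simp
  then show "0 \<le> x^a * uu x^b * (1/(1+x^2))" by (rule mult_nonneg_nonneg[OF ig_nonneg[OF x]])
qed
lemma CC_nonneg: "0 \<le> CC a b"
  by (auto simp: CC_def PI_nonneg)

lemma KI_le_PI: "KI a b \<le> PI a b"
  unfolding KI_def PI_def
proof (rule integral_le[OF intg[OF c3] intg[OF c1]])
  fix x :: real assume x: "x \<in> {0..1}"
  have nn: "0 \<le> x^a * uu x^b" using x by (rule ig_nonneg)
  have "1 \<le> 1+x^2" by simp
  then have le: "1/(1+x^2) \<le> 1" by (rule divide_le_eq_1_pos[THEN iffD2, rotated]) (use zero_le_power2[of x] in linarith)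
  show "x^a * uu x^b * (1/(1+x^2)) \<le> x^a * uu x^b * 1" by (rule mult_left_mono[OF le nn])
qed

lemma KI_le_QI: "KI a b \<le> QI a b"
  unfolding KI_def QI_def
proof (rule integral_le[OF intg[OF c3] intg[OF c2]])
  fix x :: real assume x: "x \<in> {0..1}"
  have nn: "0 \<le> x^a * uu x^b" using x by (rule ig_nonneg)
  have le2: "1/(1+x^2) \<le> 2/(1+x)^2"
  proof -
    have "2*(1+x^2) - (1+x)^2 = (1-x)^2" by (simp add: power2_eq_square algebra_simps)
    then have le: "(1+x)^2 \<le> 2*(1+x^2)" using zero_le_power2[of "1-x"] by linarith
    have p1: "0 < 1 + x^2" by (rule pos2)
    have p2: "0 < (1+x)^2" using x by simp
    have "2/(2*(1+x^2)) \<le> 2/(1+x)^2" by (rule divide_left_mono[OF le]) (use p1 p2 in auto)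
    then show ?thesis by (metis mult_divide_mult_cancel_left_if zero_neq_numeral mult_1_right)
  qed
  show "x^a * uu x^b * (1/(1+x^2)) \<le> x^a * uu x^b * (2/(1+x)^2)" by (rule mult_left_mono[OF le2 nn])
qed

lemma R1: "CC a (Suc b) - CC (a+2) (Suc b) = 2 * real (Suc b) / (real a + 1) * CC (a+1) (Suc b)"
proof -
  have "QI a b - QI (a+2) b = integral {0..1} (\<lambda>x. x^a * uu x^b * (2/(1+x)^2) - x^(a+2) * uu x^b * (2/(1+x)^2))"
    unfolding QI_def by (rule integral_diff[symmetric, OF intg[OF c2] intg[OF c2]])
  also have "\<dots> = integral {0..1} (\<lambda>x. 2 * (x^a * uu x^(Suc b) * 1))"
  proof (rule integral_cong)
    fix x :: real assume x: "x \<in> {0..1}"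
    have "1+x \<noteq> 0" using x by auto
    then have "(1 - x^2) * (2/(1+x)^2) = 2 * uu x"
      unfolding uu_def by (simp add: field_simps) (simp add: power2_eq_square algebra_simps)
    note F = this
    have aux: "\<And>p u D y::real. p*u*D - (p*y)*u*D = p*u*((1-y)*D)" by (simp add: algebra_simps)
    have pa: "x^(a+2) = x^a * x^2" by (rule power_add)
    have "x^a * uu x^b * (2/(1+x)^2) - x^(a+2) * uu x^b * (2/(1+x)^2) = x^a * uu x^b * ((1 - x^2)*(2/(1+x)^2))"
      by (simp only: pa aux)
    also have "\<dots> = x^a * uu x^b * (2 * uu x)" by (simp only: F)
    also have "\<dots> = 2 * (x^a * uu x^(Suc b) * 1)" by (simp add: algebra_simps)
    finally show "x^a * uu x^b * (2/(1+x)^2) - x^(a+2) * uu x^b * (2/(1+x)^2) = 2 * (x^a * uu x^(Suc b) * 1)" .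
  qed
  also have "\<dots> = 2 * PI a (Suc b)"
    using integral_mult[OF intg[OF c1, of a "Suc b"], of 2] by (simp only: PI_def)
  finally have e: "QI a b - QI (a+2) b = 2 * PI a (Suc b)" .
  have c1: "CC (a+1) (Suc b) = (real a + 1) * PI a (Suc b)" by (simp add: CC_def)
  have "CC a (Suc b) - CC (a+2) (Suc b) = real (Suc b) * (QI a b - QI (a+2) b)"
    by (simp only: CC_Suc right_diff_distrib)
  also have "\<dots> = real (Suc b) * (2 * PI a (Suc b))" by (simp only: e)
  also have "\<dots> = 2 * real (Suc b) / (real a + 1) * ((real a + 1) * PI a (Suc b))" by (simp add: field_simps)
  finally show ?thesis by (simp only: c1)
qed

lemma Kp: "PI a b = KI a b + KI (a+2) b"
proof -
  have "KI a b + KI (a+2) b = integral {0..1} (\<lambda>x. x^a * uu x^b * (1/(1+x^2)) + x^(a+2) * uu x^b * (1/(1+x^2)))"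
    unfolding KI_def by (rule integral_add[symmetric, OF intg[OF c3] intg[OF c3]])
  also have "\<dots> = PI a b" unfolding PI_def
  proof (rule integral_cong)
    fix x :: real assume x: "x \<in> {0..1}"
    have "1 + x^2 \<noteq> 0" using pos2[of x] by linarith
    have "x^a * uu x^b * (1/(1+x^2)) + x^(a+2) * uu x^b * (1/(1+x^2)) = (x^a * uu x^b) * (1 + x^2) * (1/(1+x^2))"
      by (simp only: ring_distribs mult_1_right power_add) (simp add: algebra_simps)
    then show "x^a * uu x^b * (1/(1+x^2)) + x^(a+2) * uu x^b * (1/(1+x^2)) = x^a * uu x^b * 1"
      using \<open>1 + x^2 \<noteq> 0\<close> by simp
  qed
  finally show ?thesis by simp
qed

lemma Kq: "QI a b = KI a b + KI a (b+2)"
proof -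
  have "KI a b + KI a (b+2) = integral {0..1} (\<lambda>x. x^a * uu x^b * (1/(1+x^2)) + x^a * uu x^(b+2) * (1/(1+x^2)))"
    unfolding KI_def by (rule integral_add[symmetric, OF intg[OF c3] intg[OF c3]])
  also have "\<dots> = QI a b" unfolding QI_def
  proof (rule integral_cong)
    fix x :: real assume x: "x \<in> {0..1}"
    have h: "1 + x^2 \<noteq> 0" using pos2[of x] by linarith
    have "1+x \<noteq> 0" using x by auto
    then have "1 + uu x ^ 2 = 2 * (1 + x^2) / (1+x)^2"
      unfolding uu_def by (simp add: field_simps) (simp add: power2_eq_square algebra_simps)
    then have "(1 + uu x^2) * (1/(1+x^2)) = (2 * (1 + x^2)) / ((1+x)^2 * (1+x^2))" by simp
    also have "\<dots> = 2/(1+x)^2" using h by (rule mult_divide_mult_cancel_right)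
    finally have e: "(1 + uu x^2) * (1/(1+x^2)) = 2/(1+x)^2" .
    have "x^a * uu x^b * (1/(1+x^2)) + x^a * uu x^(b+2) * (1/(1+x^2)) = (x^a * uu x^b) * ((1 + uu x^2) * (1/(1+x^2)))"
      by (simp only: ring_distribs mult_1_right power_add)
    also have "\<dots> = x^a * uu x^b * (2/(1+x)^2)" by (simp only: e)
    finally show "x^a * uu x^b * (1/(1+x^2)) + x^a * uu x^(b+2) * (1/(1+x^2)) = x^a * uu x^b * (2/(1+x)^2)" .
  qed
  finally show ?thesis by simp
qed


lemma t1: "(x::real) > 0 \<Longrightarrow> x * (1/x - 1/(x + 1)) = 1/(x+1)"
proof -
  assume x: "x > 0"
  have "x * (1/x - 1/(x + 1)) = 1 - x/(x+1)" using x by (simp add: right_diff_distrib)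
  also have "\<dots> = 1/(x+1)" using x by (simp add: field_simps)
  finally show ?thesis .
qed
lemma t2: "real (Suc b') * (1/((real b'+1)*(real b'+2))) = 1/(real (Suc b') + 1)"
proof -
  have p: "real b' + 1 \<noteq> 0" by auto
  have e: "real (Suc b') = real b' + 1" by simp
  have "real (Suc b') * (1/((real b'+1)*(real b'+2))) = (real b'+1) / ((real b'+1)*(real b'+2))"
    by (simp only: e times_divide_eq_right mult_1_right)
  also have "\<dots> = 1/(real b'+2)" using p by (rule nonzero_divide_mult_cancel_left)
  finally show ?thesis by simp
qed
lemma t3: "(y::real) > 0 \<Longrightarrow> p * y \<le> 1/z \<Longrightarrow> p \<le> 1/(y*z)"
proof -
  assume y: "y > 0" and h: "p * y \<le> 1/z"
  have "p \<le> (1/z)/y" by (subst pos_le_divide_eq[OF y]) (rule h)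
  also have "(1/z)/y = 1/(y*z)" by (simp add: divide_divide_eq_left mult.commute)
  finally show ?thesis .
qed

lemma int_pow: "integral {0..1} (\<lambda>x::real. x^n) = 1/(real n+1)"
  using pow_int by (rule integral_unique)

lemma pow_integrable: "(\<lambda>x::real. x^n) integrable_on {0..1}"
  using pow_int by blast

lemma CC_le1: "CC a b \<le> 1"
proof (cases "a = 0")
  case True then show ?thesis by (simp add: CC_def)
next
  case False
  have "PI (a-1) b \<le> integral {0..1} (\<lambda>x::real. x^(a-1))"
    unfolding PI_def
  proof (rule integral_le[OF intg[OF c1] pow_integrable])
    fix x :: real assume x: "x \<in> {0..1}"
    have "uu x ^ b \<le> 1" using uu_nonneg[OF x] uu_le1[OF x] by (rule power_le_one)
    then show "x^(a-1) * uu x^b * 1 \<le> x^(a-1)"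
      using x by (simp add: mult_left_le)
  qed
  then have "PI (a-1) b \<le> 1 / real a" using False by (simp add: int_pow of_nat_diff)
  then show ?thesis using False by (simp add: CC_def field_simps)
qed

lemma CC_le_a: assumes "b \<ge> 1" shows "CC a b \<le> 1/(real a+1)"
proof (cases "a = 0")
  case True then show ?thesis by (simp add: CC_def)
next
  case False
  have i2: "(\<lambda>x::real. x^(a-1) - x^a) integrable_on {0..1}"
    by (intro integrable_diff pow_integrable)
  have "PI (a-1) b \<le> integral {0..1} (\<lambda>x::real. x^(a-1) - x^a)"
    unfolding PI_def
  proof (rule integral_le[OF intg[OF c1] i2])
    fix x :: real assume x: "x \<in> {0..1}"
    have "uu x ^ b \<le> uu x ^ 1" using uu_nonneg[OF x] uu_le1[OF x] assms by (intro power_decreasing) auto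
    also have "\<dots> \<le> 1 - x" using uu_le[OF x] by simp
    finally have "x^(a-1) * uu x^b \<le> x^(a-1) * (1 - x)" using x by (intro mult_left_mono) auto
    also have "\<dots> = x^(a-1) - x^a" using False by (simp add: algebra_simps power_eq_if)
    finally show "x^(a-1) * uu x^b * 1 \<le> x^(a-1) - x^a" by simp
  qed
  also have "\<dots> = 1/real a - 1/(real a + 1)"
    using False by (simp add: integral_diff pow_integrable int_pow of_nat_diff)
  finally have "PI (a-1) b \<le> 1/real a - 1/(real a + 1)" .
  then have "real a * PI (a-1) b \<le> real a * (1/real a - 1/(real a + 1))" by (simp add: mult_left_mono)
  also have "\<dots> = 1/(real a+1)" using False by (intro t1) simp
  finally show ?thesis using False by (simp add: CC_def)
qed

lemma QI_bound_int: "((\<lambda>x. (1 - uu x) * uu x^b * (2/(1+x)^2)) has_integral 1/((real b+1)*(real b+2))) {0..1}"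
proof -
  define F where "F x = (uu x ^ Suc (Suc b)) / (real b + 2) - (uu x ^ Suc b) / (real b + 1)" for x
  have "((\<lambda>x. (1 - uu x) * uu x^b * (2/(1+x)^2)) has_integral (F 1 - F 0)) {0..1}"
  proof (rule fundamental_theorem_of_calculus)
    fix x :: real assume x: "x \<in> {0..1}"
    have d: "(F has_real_derivative
        ((real (Suc (Suc b)) * (-2/(1+x)^2 * uu x ^ (Suc (Suc b) - Suc 0))) / (real b+2)
         - (real (Suc b) * (-2/(1+x)^2 * uu x ^ (Suc b - Suc 0))) / (real b+1))) (at x within {0..1})"
      unfolding F_def[abs_def]
      by (intro DERIV_diff DERIV_cdivide DERIV_power uu_deriv) (use x in auto)
    have p1: "real b + 1 \<noteq> 0" and p2: "real b + 2 \<noteq> 0" by auto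
    have "(real (Suc (Suc b)) * (-2/(1+x)^2 * uu x ^ (Suc (Suc b) - Suc 0))) / (real b+2)
         = - (uu x * uu x ^ b * (2/(1+x)^2))"
    proof -
      have e: "real (Suc (Suc b)) = real b + 2" by simp
      show ?thesis by (simp only: e nonzero_mult_div_cancel_left[OF p2]) simp
    qed
    moreover have "(real (Suc b) * (-2/(1+x)^2 * uu x ^ (Suc b - Suc 0))) / (real b+1)
         = - (uu x ^ b * (2/(1+x)^2))"
    proof -
      have e: "real (Suc b) = real b + 1" by simp
      show ?thesis by (simp only: e nonzero_mult_div_cancel_left[OF p1]) simp
    qed
    ultimately have eq: "((real (Suc (Suc b)) * (-2/(1+x)^2 * uu x ^ (Suc (Suc b) - Suc 0))) / (real b+2)
         - (real (Suc b) * (-2/(1+x)^2 * uu x ^ (Suc b - Suc 0))) / (real b+1))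
        = (1 - uu x) * uu x^b * (2/(1+x)^2)"
      by (simp add: algebra_simps)
    show "(F has_vector_derivative (1 - uu x) * uu x^b * (2/(1+x)^2)) (at x within {0..1})"
      using DERIV_cong[OF d eq] by (simp only: has_real_derivative_iff_has_vector_derivative)
  qed simp
  moreover have "F 1 - F 0 = 1/((real b+1)*(real b+2))"
  proof -
    have "F 1 - F 0 = 1/(real b+1) - 1/(real b+2)" by (simp add: F_def)
    also have "\<dots> = 1/((real b+1)*(real b+2))" by (simp add: field_simps)
    finally show ?thesis .
  qed
  ultimately show ?thesis by simp
qed

lemma CC_le_b: assumes "a \<ge> 1" shows "CC a b \<le> 1/(real b+1)"
proof (cases b)
  case 0 then show ?thesis by simp
next
  case (Suc b')
  have ii: "(\<lambda>x. (1 - uu x) * uu x^b' * (2/(1+x)^2)) integrable_on {0..1}"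
    using QI_bound_int by blast
  have "QI a b' \<le> integral {0..1} (\<lambda>x. (1 - uu x) * uu x^b' * (2/(1+x)^2))"
    unfolding QI_def
  proof (rule integral_le[OF intg[OF c2] ii])
    fix x :: real assume x: "x \<in> {0..1}"
    have "x^a \<le> x^1" using x assms by (intro power_decreasing) auto
    also have "\<dots> \<le> 1 - uu x" using x_le_1_uu[OF x] by simp
    finally have "x^a \<le> 1 - uu x" .
    moreover have "0 \<le> uu x^b' * (2/(1+x)^2)" using uu_nonneg[OF x] x by simp
    ultimately have "x^a * (uu x^b' * (2/(1+x)^2)) \<le> (1 - uu x) * (uu x^b' * (2/(1+x)^2))"
      by (rule mult_right_mono)
    then show "x^a * uu x^b' * (2/(1+x)^2) \<le> (1 - uu x) * uu x^b' * (2/(1+x)^2)"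
      by (simp add: mult.assoc)
  qed
  also have "\<dots> = 1/((real b'+1)*(real b'+2))" using QI_bound_int by (rule integral_unique)
  finally have "real (Suc b') * QI a b' \<le> real (Suc b') * (1/((real b'+1)*(real b'+2)))"
    by (intro mult_left_mono) auto
  then show ?thesis using Suc by (simp only: CC_Suc t2)
qed

definition sig1 :: "nat \<Rightarrow> real" where "sig1 d = (if odd d then (-1) ^ ((d - 1) div 2) else 0)"
definition sig0 :: "nat \<Rightarrow> real" where "sig0 d = (if odd d then 1 else 0)"

lemma sig1_odd [simp]: "sig1 (Suc (2*k)) = (-1)^k" by (simp add: sig1_def)
lemma sig0_odd [simp]: "sig0 (Suc (2*k)) = 1" by (simp add: sig0_def)
lemma abs_sig1: "\<bar>sig1 d\<bar> \<le> 1" by (simp add: sig1_def)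
lemma abs_sig0: "\<bar>sig0 d\<bar> \<le> 1" by (simp add: sig0_def)

lemma has_sum_odd_shift:
  fixes f :: "nat \<Rightarrow> real"
  assumes S: "((\<lambda>k. f (a' + 1 + 2*k)) has_sum S) UNIV"
    and Z: "\<And>a. a' < a \<Longrightarrow> even (a - a') \<Longrightarrow> f a = 0"
  shows "(f has_sum S) {a'<..}"
proof -
  define g where "g k = a' + 1 + 2*k" for k
  have inj: "inj_on g UNIV" by (auto simp: g_def inj_on_def)
  have "(f has_sum S) (g ` UNIV)" using S by (subst has_sum_reindex[OF inj]) (simp add: g_def o_def)
  moreover have sub: "g ` UNIV \<subseteq> {a'<..}" by (auto simp: g_def)
  moreover have zer: "f a = 0" if "a \<in> {a'<..} - g ` UNIV" for a
  proof -
    have "even (a - a')"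
    proof (rule ccontr)
      assume "odd (a - a')"
      then obtain k where "a - a' = Suc (2*k)" by (metis oddE Suc_eq_plus1)
      then have "a = g k" using that by (auto simp: g_def)
      then show False using that by auto
    qed
    then show ?thesis using that Z by auto
  qed
  moreover have "(f has_sum S) {a'<..} \<longleftrightarrow> (f has_sum S) (g ` UNIV)"
    by (rule has_sum_cong_neutral) (use sub zer in auto)
  ultimately show ?thesis by simp
qed

lemma summable_invsq: "summable (\<lambda>k. inverse (real (Suc k) ^ 2))"
  using inverse_power_summable[of 2, where 'a=real] by (subst summable_Suc_iff) simp

lemma tele_has_sum:
  fixes G :: "nat \<Rightarrow> real"
  assumes "G \<longlonglongrightarrow> 0" and B: "\<And>k. \<bar>G k - G (Suc k)\<bar> \<le> inverse (real (Suc k) ^ 2)"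
  shows "((\<lambda>k. G k - G (Suc k)) has_sum G 0) UNIV"
proof -
  have s: "(\<lambda>k. G k - G (Suc k)) sums G 0" using telescope_sums'[OF assms(1)] by simp
  have sq: "(\<lambda>k. inverse (real (Suc k) ^ 2)) summable_on UNIV"
    using summable_invsq by (rule summable_nonneg_imp_summable_on) simp
  have "(\<lambda>k. norm (G k - G (Suc k))) summable_on UNIV"
    by (rule summable_on_comparison_test[OF sq]) (use B in auto)
  then have "(\<lambda>k. G k - G (Suc k)) summable_on UNIV" by (rule abs_summable_summable)
  then have "((\<lambda>k. G k - G (Suc k)) has_sum infsum (\<lambda>k. G k - G (Suc k)) UNIV) UNIV" by (rule has_sum_infsum)
  moreover from this have "(\<lambda>k. G k - G (Suc k)) sums infsum (\<lambda>k. G k - G (Suc k)) UNIV" by (rule has_sum_imp_sums)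
  ultimately show ?thesis using s sums_unique2 by metis
qed

lemma invsq_le: "real k \<le> real n \<Longrightarrow> 1/((real n+1)*(real n+2)) \<le> inverse (real (Suc k) ^ 2)"
proof -
  assume h: "real k \<le> real n"
  have "1/((real n+1)*(real n+2)) \<le> 1/(real k+1)^2"
  proof (rule divide_left_mono)
    show "(real k + 1)^2 \<le> (real n+1)*(real n+2)" using h by (simp add: power2_eq_square mult_mono)
  qed auto
  then show ?thesis by (simp add: inverse_eq_divide add.commute)
qed

lemma PI_small: "b \<ge> 1 \<Longrightarrow> PI n b \<le> 1/((real n+1)*(real n+2))"
proof -
  assume b: "b \<ge> 1"
  have "PI n b * (real n + 1) \<le> 1/(real n + 2)"
    using CC_le_a[OF b, of "Suc n"] by (simp add: CC_def add.commute mult.commute)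
  then show ?thesis by (rule t3[rotated]) simp
qed

lemma QI_small: "a \<ge> 1 \<Longrightarrow> QI a n \<le> 1/((real n+1)*(real n+2))"
proof -
  assume a: "a \<ge> 1"
  have "QI a n * (real n + 1) \<le> 1/(real n + 2)"
    using CC_le_b[OF a, of "Suc n"] by (simp add: CC_Suc add.commute mult.commute)
  then show ?thesis by (rule t3[rotated]) simp
qed

lemma tends_bound0:
  fixes G :: "nat \<Rightarrow> real"
  assumes "\<And>k. \<bar>G k\<bar> \<le> inverse (real (Suc k) ^ 2)" shows "G \<longlonglongrightarrow> 0"
proof (rule Lim_null_comparison[OF _ summable_LIMSEQ_zero[OF summable_invsq]])
  show "\<forall>\<^sub>F k in sequentially. norm (G k) \<le> inverse (real (Suc k) ^ 2)" using assms by simp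
qed

lemma inner_a:
  assumes "b \<ge> 1"
  shows "((\<lambda>a. sig1 (a - a') * CC a b / real a) has_sum KI a' b) {a'<..}"
proof (rule has_sum_odd_shift)
  define G where "G k = (-1)^k * KI (a' + 2*k) b" for k
  have dif: "G k - G (Suc k) = (-1)^k * PI (a'+2*k) b" for k
  proof -
    have "G k - G (Suc k) = (-1)^k * (KI (a'+2*k) b + KI (a'+2*k+2) b)" by (simp add: G_def algebra_simps)
    then show ?thesis by (simp only: Kp[symmetric])
  qed
  have bnd: "PI (a' + 2*k) b \<le> inverse (real (Suc k) ^ 2)" for k
    using PI_small[OF assms, of "a'+2*k"] invsq_le[of k "a'+2*k"] by simp
  have "((\<lambda>k. G k - G (Suc k)) has_sum G 0) UNIV"
  proof (rule tele_has_sum)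
    show "G \<longlonglongrightarrow> 0"
    proof (rule tends_bound0)
      fix k
      have "\<bar>G k\<bar> = KI (a'+2*k) b" by (simp add: G_def abs_mult KI_nonneg)
      also have "\<dots> \<le> PI (a'+2*k) b" by (rule KI_le_PI)
      finally show "\<bar>G k\<bar> \<le> inverse (real (Suc k) ^ 2)" using bnd[of k] by linarith
    qed
    fix k
    show "\<bar>G k - G (Suc k)\<bar> \<le> inverse (real (Suc k) ^ 2)" using bnd[of k] by (simp add: dif abs_mult PI_nonneg)
  qed
  moreover have "G k - G (Suc k) = sig1 (a' + 1 + 2 * k - a') * CC (a' + 1 + 2 * k) b / real (a' + 1 + 2 * k)" for k
  proof -
    have s: "sig1 (a' + 1 + 2 * k - a') = (-1)^k" by (simp add: sig1_def)
    have c: "CC (a' + 1 + 2 * k) b / real (a' + 1 + 2 * k) = PI (a'+2*k) b" by (simp add: CC_def)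
    show ?thesis by (simp only: dif s times_divide_eq_right[symmetric] c)
  qed
  ultimately show "((\<lambda>k. sig1 (a' + 1 + 2 * k - a') * CC (a' + 1 + 2 * k) b / real (a' + 1 + 2 * k)) has_sum KI a' b) UNIV"
    by (simp add: G_def)
qed (simp add: sig1_def)

lemma inner_b:
  assumes "a \<ge> 1"
  shows "((\<lambda>b. sig1 (b - b') * CC a b / real b) has_sum KI a b') {b'<..}"
proof (rule has_sum_odd_shift)
  define G where "G k = (-1)^k * KI a (b' + 2*k)" for k
  have dif: "G k - G (Suc k) = (-1)^k * QI a (b'+2*k)" for k
  proof -
    have "G k - G (Suc k) = (-1)^k * (KI a (b'+2*k) + KI a (b'+2*k+2))" by (simp add: G_def algebra_simps)
    then show ?thesis by (simp only: Kq[symmetric])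
  qed
  have bnd: "QI a (b' + 2*k) \<le> inverse (real (Suc k) ^ 2)" for k
    using QI_small[OF assms, of "b'+2*k"] invsq_le[of k "b'+2*k"] by simp
  have "((\<lambda>k. G k - G (Suc k)) has_sum G 0) UNIV"
  proof (rule tele_has_sum)
    show "G \<longlonglongrightarrow> 0"
    proof (rule tends_bound0)
      fix k
      have "\<bar>G k\<bar> = KI a (b'+2*k)" by (simp add: G_def abs_mult KI_nonneg)
      also have "\<dots> \<le> QI a (b'+2*k)" by (rule KI_le_QI)
      finally show "\<bar>G k\<bar> \<le> inverse (real (Suc k) ^ 2)" using bnd[of k] by linarith
    qed
    fix k
    show "\<bar>G k - G (Suc k)\<bar> \<le> inverse (real (Suc k) ^ 2)" using bnd[of k] by (simp add: dif abs_mult QI_nonneg)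
  qed
  moreover have "G k - G (Suc k) = sig1 (b' + 1 + 2 * k - b') * CC a (b' + 1 + 2 * k) / real (b' + 1 + 2 * k)" for k
  proof -
    have s: "sig1 (b' + 1 + 2 * k - b') = (-1)^k" by (simp add: sig1_def)
    have "CC a (b' + 1 + 2 * k) = real (b' + 1 + 2*k) * QI a (b' + 2*k)" using CC_Suc[of a "b'+2*k"] by simp
    then have c: "CC a (b' + 1 + 2 * k) / real (b' + 1 + 2 * k) = QI a (b'+2*k)" by simp
    show ?thesis by (simp only: dif s times_divide_eq_right[symmetric] c)
  qed
  ultimately show "((\<lambda>k. sig1 (b' + 1 + 2 * k - b') * CC a (b' + 1 + 2 * k) / real (b' + 1 + 2 * k)) has_sum KI a b') UNIV"
    by (simp add: G_def)
qed (simp add: sig1_def)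

lemma inner_c:
  assumes "b \<ge> 1"
  shows "((\<lambda>a. sig0 (a - a') * CC a b / real a) has_sum CC a' b / (2 * real b)) {a'<..}"
proof (rule has_sum_odd_shift)
  obtain b'' where b: "b = Suc b''" using assms by (cases b) auto
  define G where "G k = CC (a' + 2*k) b / (2 * real b)" for k
  have bnd: "CC (Suc (a' + 2*k)) b / real (Suc (a' + 2*k)) \<le> inverse (real (Suc k) ^ 2)" for k
    using PI_small[OF assms, of "a'+2*k"] invsq_le[of k "a'+2*k"] by (simp add: CC_def)
  have dif: "G k - G (Suc k) = CC (Suc (a' + 2*k)) b / real (Suc (a' + 2*k))" for k
  proof -
    have "CC (a' + 2*k) b - CC (a' + 2*k + 2) b = 2 * real b / (real (a'+2*k) + 1) * CC (a' + 2*k + 1) b"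
      using R1[of "a'+2*k" b''] b by simp
    then show ?thesis using assms by (simp add: G_def field_simps)
  qed
  have "((\<lambda>k. G k - G (Suc k)) has_sum G 0) UNIV"
  proof (rule tele_has_sum)
    show "G \<longlonglongrightarrow> 0"
    proof (rule Lim_null_comparison[OF _ LIMSEQ_inverse_real_of_nat])
      have "\<bar>G k\<bar> \<le> inverse (real (Suc k))" for k
      proof -
        have "\<bar>G k\<bar> = CC (a'+2*k) b / (2 * real b)" using CC_nonneg by (simp add: G_def)
        also have "\<dots> \<le> CC (a'+2*k) b / 1"
          by (rule divide_left_mono[OF _ CC_nonneg]) (use assms in auto)
        also have "\<dots> = CC (a'+2*k) b" by simp
        also have "\<dots> \<le> 1/(real (a'+2*k)+1)" by (rule CC_le_a[OF assms])
        also have "\<dots> \<le> inverse (real (Suc k))" by (simp add: inverse_eq_divide frac_le)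
        finally show ?thesis .
      qed
      then show "\<forall>\<^sub>F k in sequentially. norm (G k) \<le> inverse (real (Suc k))" by simp
    qed
    fix k
    show "\<bar>G k - G (Suc k)\<bar> \<le> inverse (real (Suc k) ^ 2)" using bnd[of k] by (simp add: dif CC_nonneg)
  qed
  moreover have "G 0 = CC a' b / (2 * real b)" by (simp add: G_def)
  ultimately have X: "((\<lambda>k. G k - G (Suc k)) has_sum CC a' b / (2 * real b)) UNIV" by simp
  show "((\<lambda>k. sig0 (a' + 1 + 2 * k - a') * CC (a' + 1 + 2 * k) b / real (a' + 1 + 2 * k)) has_sum CC a' b / (2 * real b)) UNIV"
    using X by (rule has_sum_cong[THEN iffD1, rotated]) (simp add: dif sig0_def)
qed (simp add: sig0_def)


definition M :: "nat \<Rightarrow> real" where "M a = (real a + 1) powr (-3/4)"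
definition step :: "(nat \<Rightarrow> real) \<Rightarrow> (nat \<Rightarrow> real) \<Rightarrow> nat \<Rightarrow> real" where
  "step w c a = (\<Sum>a'<a. c a' * w (a - a')) / real a"
definition maj :: "(nat \<Rightarrow> real) \<Rightarrow> real \<Rightarrow> bool" where
  "maj c K \<longleftrightarrow> 0 \<le> K \<and> (\<forall>a. \<bar>c a\<bar> \<le> K * M a)"

lemma M_pos: "0 < M a" by (simp add: M_def)
lemma M_0: "M 0 = 1" by (simp add: M_def)
lemma step_0 [simp]: "step w c 0 = 0" by (simp add: step_def)

lemma pow4: "0 \<le> (z::real) \<Longrightarrow> (z powr (1/4))^4 = z"
proof (cases "z = 0")
  case False
  assume "0 \<le> z"
  then have z: "0 < z" using False by simp
  have "(z powr (1/4))^4 = (z powr (1/4)) powr (real 4)" using z by (simp add: powr_realpow)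
  also have "\<dots> = z" using z by (simp add: powr_powr)
  finally show ?thesis .
qed simp

lemma pow3: "0 < (z::real) \<Longrightarrow> (z powr (1/4))^3 = z powr (3/4)"
proof -
  assume z: "0 < z"
  have "(z powr (1/4))^3 = (z powr (1/4)) powr (real 3)" using z by (simp add: powr_realpow)
  also have "\<dots> = z powr (3/4)" using z by (simp add: powr_powr)
  finally show ?thesis .
qed

lemma key_ineq: "4 * real n powr (1/4) + (real n + 1) powr (-3/4) \<le> 4 * (real n + 1) powr (1/4)"
proof -
  define x where "x = real n powr (1/4)"
  define y where "y = (real n + 1) powr (1/4)"
  have x0: "0 \<le> x" by (simp add: x_def)
  have y0: "0 < y" by (simp add: y_def)
  have x4: "x^4 = real n" unfolding x_def by (rule pow4) simp
  have y4: "y^4 = real n + 1" unfolding y_def by (rule pow4) simp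
  have xy: "x \<le> y" unfolding x_def y_def by (rule powr_mono2) auto
  have y3: "(real n + 1) powr (-3/4) = 1 / y^3"
  proof -
    have "(real n + 1) powr (-3/4) = 1 / (real n + 1) powr (3/4)" by (simp add: powr_minus_divide)
    also have "(real n + 1) powr (3/4) = y^3" unfolding y_def by (rule pow3[symmetric]) simp
    finally show ?thesis .
  qed
  have fact: "(y - x) * (y^3 + y^2*x + y*x^2 + x^3) = y^4 - x^4"
    by (simp add: eval_nat_numeral algebra_simps)
  have t1: "y^2*x \<le> y^2*y" using xy x0 by (intro mult_left_mono) auto
  have t2: "y*x^2 \<le> y*y^2" using xy x0 y0 by (intro mult_left_mono power_mono) auto
  have t3: "x^3 \<le> y^3" using xy x0 by (intro power_mono) auto
  have "y^3 + y^2*x + y*x^2 + x^3 \<le> 4*y^3" using t1 t2 t3 by (simp add: eval_nat_numeral algebra_simps)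
  then have "(y - x) * (y^3 + y^2*x + y*x^2 + x^3) \<le> (y - x) * (4*y^3)"
    using xy by (intro mult_left_mono) auto
  then have "1 \<le> (4 * (y - x)) * y^3" using fact x4 y4 by (simp add: algebra_simps)
  then have h: "1 / y^3 \<le> 4 * (y - x)" using y0 by (simp add: pos_divide_le_eq)
  have "4*x + (real n + 1) powr (-3/4) = 4*x + 1/y^3" by (simp only: y3)
  also have "\<dots> \<le> 4*x + 4 * (y - x)" using h by (rule add_left_mono)
  also have "\<dots> = 4*y" by (simp add: algebra_simps)
  finally have fin: "4*x + (real n + 1) powr (-3/4) \<le> 4*y" .
  then show ?thesis unfolding x_def y_def .
qed

lemma sumM: "(\<Sum>a<n. M a) \<le> 4 * real n powr (1/4)"
proof (induction n)
  case (Suc n)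
  have "(\<Sum>a<Suc n. M a) = (\<Sum>a<n. M a) + (real n + 1) powr (-3/4)" by (simp add: M_def)
  also have "\<dots> \<le> 4 * real n powr (1/4) + (real n + 1) powr (-3/4)" using Suc by simp
  also have "\<dots> \<le> 4 * (real n + 1) powr (1/4)" by (rule key_ineq)
  finally show ?case by (simp add: add.commute)
qed simp

lemma stepM: assumes "1 \<le> a" shows "(\<Sum>a'<a. M a') / real a \<le> 8 * M a"
proof -
  have a: "0 < real a" using assms by simp
  have "(\<Sum>a'<a. M a') / real a \<le> (4 * real a powr (1/4)) / real a"
    using sumM[of a] a by (simp add: divide_right_mono)
  also have "\<dots> = 4 * (real a powr (1/4) / real a)" by simp
  also have "real a powr (1/4) / real a = real a powr (-3/4)"
  proof -
    have "real a powr (1/4 - 1) = real a powr (1/4) / real a powr 1" by (rule powr_diff)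
    then show ?thesis using a by simp
  qed
  also have "real a powr (-3/4) \<le> 2 * (real a + 1) powr (-3/4)"
  proof -
    have "(real a + 1) powr (3/4) \<le> (2 * real a) powr (3/4)" using assms by (intro powr_mono2) auto
    also have "\<dots> = 2 powr (3/4) * real a powr (3/4)" by (simp add: powr_mult)
    also have "\<dots> \<le> 2 * real a powr (3/4)"
    proof -
      have "(2::real) powr (3/4) \<le> 2 powr 1" by (rule powr_mono) auto
      then show ?thesis by (intro mult_right_mono) auto
    qed
    finally have h: "(real a + 1) powr (3/4) \<le> 2 * real a powr (3/4)" .
    have p1: "0 < real a powr (3/4)" "0 < (real a + 1) powr (3/4)" using a by auto
    have "1 / real a powr (3/4) \<le> 2 / (real a + 1) powr (3/4)"
      using h p1 by (simp add: divide_simps)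
    then show ?thesis by (simp add: powr_minus_divide)
  qed
  finally show ?thesis by (simp add: M_def mult.assoc)
qed

lemma maj_mono: "maj c K \<Longrightarrow> K \<le> K' \<Longrightarrow> maj c K'"
  unfolding maj_def by (meson M_pos dual_order.trans less_imp_le mult_right_mono)

lemma maj_step:
  assumes c: "maj c K" and w: "\<And>d. \<bar>w d\<bar> \<le> 1"
  shows "maj (step w c) (8 * K)"
  unfolding maj_def
proof (intro conjI allI)
  show "0 \<le> 8 * K" using c by (simp add: maj_def)
  fix a
  show "\<bar>step w c a\<bar> \<le> 8 * K * M a"
  proof (cases "a = 0")
    case True then show ?thesis using c M_pos[of 0] by (simp add: maj_def)
  next
    case False
    have "\<bar>\<Sum>a'<a. c a' * w (a - a')\<bar> \<le> (\<Sum>a'<a. K * M a')"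
    proof -
      have "\<bar>\<Sum>a'<a. c a' * w (a - a')\<bar> \<le> (\<Sum>a'<a. \<bar>c a' * w (a - a')\<bar>)" by (rule sum_abs)
      also have "\<dots> \<le> (\<Sum>a'<a. K * M a')"
      proof (rule sum_mono)
        fix a' assume "a' \<in> {..<a}"
        have "\<bar>c a' * w (a - a')\<bar> = \<bar>c a'\<bar> * \<bar>w (a - a')\<bar>" by (simp add: abs_mult)
        also have "\<dots> \<le> \<bar>c a'\<bar> * 1" using w by (intro mult_left_mono) auto
        also have "\<dots> \<le> K * M a'" using c by (simp add: maj_def)
        finally show "\<bar>c a' * w (a - a')\<bar> \<le> K * M a'" .
      qed
      finally show ?thesis .
    qed
    then have "\<bar>step w c a\<bar> \<le> (\<Sum>a'<a. K * M a') / real a" using False by (simp add: step_def divide_right_mono)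
    also have "\<dots> = K * ((\<Sum>a'<a. M a') / real a)" by (simp add: sum_distrib_left)
    also have "\<dots> \<le> K * (8 * M a)" using stepM[of a] False c by (intro mult_left_mono) (auto simp: maj_def)
    finally show ?thesis by simp
  qed
qed

lemma maj_delta: "maj (\<lambda>a. if a = 0 then 1 else 0) 1"
  by (simp add: maj_def M_0 less_imp_le[OF M_pos])

lemma maj_le: "maj e K \<Longrightarrow> (\<And>b. \<bar>f b\<bar> \<le> \<bar>e b\<bar>) \<Longrightarrow> maj f K"
  unfolding maj_def by (meson dual_order.trans)

lemma summ54: "(\<lambda>a. (real a + 1) powr (-5/4)) summable_on UNIV"
proof -
  have "summable (\<lambda>n. real n powr (-5/4))" by (subst summable_real_powr_iff) simp
  then have "summable (\<lambda>n. real (Suc n) powr (-5/4))" by (subst summable_Suc_iff)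
  then have "summable (\<lambda>n. (real n + 1) powr (-5/4))" by (simp add: add.commute)
  then show ?thesis by (rule summable_nonneg_imp_summable_on) simp
qed

lemma summ_pair: "(\<lambda>(a,b). (real a + 1) powr (-5/4) * (real b + 1) powr (-5/4)) summable_on UNIV"
proof -
  define A where "A a = (real a + 1) powr (-5/4)" for a :: nat
  have hB: "(A has_sum infsum A UNIV) UNIV" using summ54 unfolding A_def by (rule has_sum_infsum)
  have "(\<lambda>(a,b). A a * A b) summable_on (Sigma UNIV (\<lambda>_. UNIV))"
  proof (rule summable_on_SigmaI)
    show "((\<lambda>b. (\<lambda>(a,b). A a * A b) (a, b)) has_sum A a * infsum A UNIV) UNIV" for a
      using has_sum_cmult_right[OF hB, of "A a"] by simp
    show "(\<lambda>a. A a * infsum A UNIV) summable_on UNIV"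
      using summ54 unfolding A_def by (rule summable_on_cmult_left)
  qed (auto simp: A_def)
  then show ?thesis by (simp add: A_def)
qed

lemma CC_sq: assumes "1 \<le> a" "1 \<le> b"
  shows "CC a b \<le> (real a + 1) powr (-1/2) * (real b + 1) powr (-1/2)"
proof -
  have c0: "0 \<le> CC a b" by (rule CC_nonneg)
  have "CC a b = CC a b powr (1/2 + 1/2)" using c0 by simp
  also have "\<dots> = CC a b powr (1/2) * CC a b powr (1/2)" by (rule powr_add)
  also have "\<dots> \<le> (1/(real a + 1)) powr (1/2) * (1/(real b + 1)) powr (1/2)"
    using CC_le_a[OF assms(2), of a] CC_le_b[OF assms(1), of b] c0
    by (intro mult_mono powr_mono2) auto
  also have "\<dots> = (real a + 1) powr (-1/2) * (real b + 1) powr (-1/2)"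
    by (simp add: powr_divide powr_minus_divide)
  finally show ?thesis .
qed


lemma transport:
  fixes c e w :: "nat \<Rightarrow> real" and Phi Psi :: "nat \<Rightarrow> nat \<Rightarrow> real"
  assumes summ: "(\<lambda>((a,b),a'). c a' * w (a - a') / real a * e b * Phi a b) summable_on (Sigma UNIV (\<lambda>(a,b). {..<a}))"
  assumes inner: "\<And>a' b. c a' \<noteq> 0 \<Longrightarrow> e b \<noteq> 0 \<Longrightarrow> ((\<lambda>a. w (a - a') * Phi a b / real a) has_sum Psi a' b) {a'<..}"
  shows "\<exists>S. ((\<lambda>(a,b). step w c a * e b * Phi a b) has_sum S) UNIV \<and> ((\<lambda>(a',b). c a' * e b * Psi a' b) has_sum S) UNIV"
proof -
  define F where "F = (\<lambda>((a::nat,b::nat),a'::nat). c a' * w (a - a') / real a * e b * Phi a b)"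
  have "F summable_on (Sigma UNIV (\<lambda>(a,b). {..<a}))" using summ by (simp add: F_def)
  then obtain S where hS: "(F has_sum S) (Sigma UNIV (\<lambda>(a,b). {..<a}))" by (auto simp: summable_on_def)
  have P1: "((\<lambda>(a,b). step w c a * e b * Phi a b) has_sum S) UNIV"
  proof (rule has_sum_SigmaD[OF hS])
    fix ab :: "nat \<times> nat" assume "ab \<in> UNIV"
    obtain a b where ab: "ab = (a,b)" by (cases ab)
    have "(\<Sum>a'<a. F ((a,b),a')) = step w c a * e b * Phi a b"
      by (simp add: F_def step_def sum_divide_distrib sum_distrib_right)
    then show "((\<lambda>y. F (ab, y)) has_sum (\<lambda>(a,b). step w c a * e b * Phi a b) ab) ((\<lambda>(a,b). {..<a}) ab)"
      by (simp add: ab has_sum_finiteI)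
  qed
  define g where "g = (\<lambda>((a'::nat,b::nat),a::nat). ((a,b),a'))"
  have bij: "bij_betw g (Sigma UNIV (\<lambda>(a',b). {a'<..})) (Sigma UNIV (\<lambda>(a,b). {..<a}))"
    by (rule bij_betwI[where g=g]) (auto simp: g_def)
  have hS2: "((\<lambda>x. F (g x)) has_sum S) (Sigma UNIV (\<lambda>(a',b). {a'<..}))"
    using hS by (subst has_sum_reindex_bij_betw[OF bij])
  have P2: "((\<lambda>(a',b). c a' * e b * Psi a' b) has_sum S) UNIV"
  proof (rule has_sum_SigmaD[OF hS2])
    fix ab :: "nat \<times> nat" assume "ab \<in> UNIV"
    obtain a' b where ab: "ab = (a',b)" by (cases ab)
    have eq: "F (g ((a',b), a)) = (c a' * e b) * (w (a - a') * Phi a b / real a)" for a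
      by (simp add: F_def g_def)
    have "((\<lambda>a. (c a' * e b) * (w (a - a') * Phi a b / real a)) has_sum (c a' * e b) * Psi a' b) {a'<..}"
    proof (cases "c a' = 0 \<or> e b = 0")
      case True then show ?thesis by auto
    next
      case False then show ?thesis using inner[of a' b] by (intro has_sum_cmult_right) auto
    qed
    then show "((\<lambda>y. F (g (ab, y))) has_sum (\<lambda>(a',b). c a' * e b * Psi a' b) ab) ((\<lambda>(a',b). {a'<..}) ab)"
      by (simp add: ab eq)
  qed
  from P1 P2 show ?thesis by blast
qed

lemma triple_summ:
  fixes c e w :: "nat \<Rightarrow> real" and Phi :: "nat \<Rightarrow> nat \<Rightarrow> real"
  assumes c: "maj c K" and e: "maj e K'" and e0: "e 0 = 0" and w: "\<And>d. \<bar>w d\<bar> \<le> 1"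
    and Phi: "\<And>a b. 1 \<le> a \<Longrightarrow> 1 \<le> b \<Longrightarrow> \<bar>Phi a b\<bar> \<le> (real a+1) powr (-1/2) * (real b+1) powr (-1/2)"
  shows "(\<lambda>((a,b),a'). c a' * w (a - a') / real a * e b * Phi a b) summable_on (Sigma UNIV (\<lambda>(a,b). {..<a}))"
proof -
  have K: "0 \<le> K" "0 \<le> K'" using c e by (auto simp: maj_def)
  define B where "B a b = (real a+1) powr (-1/2) * (real b+1) powr (-1/2)" for a b :: nat
  define G where "G = (\<lambda>((a::nat,b::nat),a'::nat). if b = 0 then 0 else K * M a' / real a * (K' * M b) * B a b)"
  define g where "g = (\<lambda>(a::nat,b::nat). if b = 0 then 0 else K * K' * ((\<Sum>a'<a. M a') / real a) * M b * B a b)"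
  have Mnn: "0 \<le> M a" for a using M_pos[of a] by simp
  have Bnn: "0 \<le> B a b" for a b by (simp add: B_def)
  have gnn: "0 \<le> g ab" for ab using K Mnn Bnn
    by (cases ab) (auto simp: g_def intro!: mult_nonneg_nonneg divide_nonneg_nonneg sum_nonneg)
  have gle: "g ab \<le> (8 * K * K') * (\<lambda>(a,b). (real a + 1) powr (-5/4) * (real b + 1) powr (-5/4)) ab" for ab
  proof -
    obtain a b where ab: "ab = (a,b)" by (cases ab)
    show ?thesis
    proof (cases "b = 0 \<or> a = 0")
      case True then show ?thesis using K by (auto simp: g_def ab intro!: mult_nonneg_nonneg)
    next
      case False
      then have a1: "1 \<le> a" and b1: "b \<noteq> 0" by auto
      have "g ab = K * K' * ((\<Sum>a'<a. M a') / real a) * M b * B a b" using b1 by (simp add: g_def ab)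
      also have "\<dots> \<le> K * K' * (8 * M a) * M b * B a b"
        using stepM[OF a1] K Mnn Bnn by (intro mult_right_mono mult_left_mono) (auto intro: mult_nonneg_nonneg)
      also have "\<dots> = 8 * K * K' * ((M a * (real a+1) powr (-1/2)) * (M b * (real b+1) powr (-1/2)))"
        by (simp add: B_def)
      also have "\<dots> = 8 * K * K' * ((real a + 1) powr (-5/4) * (real b + 1) powr (-5/4))"
      proof -
        have h: "M n * (real n+1) powr (-1/2) = (real n + 1) powr (-5/4)" for n
          unfolding M_def powr_add[symmetric] by simp
        show ?thesis by (simp only: h)
      qed
      finally show ?thesis by (simp add: ab)
    qed
  qed
  have gs: "g summable_on UNIV"
  proof (rule summable_on_comparison_test[OF _ gle gnn])
    show "(\<lambda>ab. 8 * K * K' * (\<lambda>(a,b). (real a + 1) powr (-5/4) * (real b + 1) powr (-5/4)) ab) summable_on UNIV"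
      using summ_pair by (rule summable_on_cmult_right)
  qed
  have Gs: "G summable_on (Sigma UNIV (\<lambda>(a,b). {..<a}))"
  proof (rule summable_on_SigmaI)
    fix ab :: "nat \<times> nat" assume "ab \<in> UNIV"
    obtain a b where ab: "ab = (a,b)" by (cases ab)
    have "(\<Sum>a'<a. G ((a,b),a')) = g (a,b)"
      by (simp add: G_def g_def sum_divide_distrib[symmetric] sum_distrib_right[symmetric] sum_distrib_left[symmetric] mult_ac)
    then show "((\<lambda>y. G (ab, y)) has_sum g ab) ((\<lambda>(a,b). {..<a}) ab)" by (simp add: ab has_sum_finiteI)
  next
    show "g summable_on UNIV" by (rule gs)
  next
    fix ab :: "nat \<times> nat" and a' :: nat assume "ab \<in> UNIV" "a' \<in> (\<lambda>(a,b). {..<a}) ab"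
    then show "0 \<le> G (ab, a')" using K Mnn Bnn
      by (cases ab) (auto simp: G_def intro!: mult_nonneg_nonneg divide_nonneg_nonneg)
  qed
  have le: "norm ((\<lambda>((a,b),a'). c a' * w (a - a') / real a * e b * Phi a b) x) \<le> G x"
    if "x \<in> Sigma UNIV (\<lambda>(a,b). {..<a})" for x
  proof -
    obtain a b a' where x: "x = ((a,b),a')" by (metis prod.collapse)
    have aa: "a' < a" using that by (simp add: x)
    show ?thesis
    proof (cases "b = 0")
      case True then show ?thesis by (simp add: x G_def e0)
    next
      case False
      have a1: "1 \<le> a" using aa by simp
      have b1: "1 \<le> b" using False by simp
      have "norm (c a' * w (a - a') / real a * e b * Phi a b) = \<bar>c a'\<bar> * \<bar>w (a - a')\<bar> / real a * \<bar>e b\<bar> * \<bar>Phi a b\<bar>"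
        by (simp add: abs_mult)
      also have "\<dots> \<le> (K * M a') * 1 / real a * (K' * M b) * B a b"
        using c e w[of "a - a'"] Phi[OF a1 b1] K Mnn Bnn
        by (intro mult_mono divide_right_mono) (auto simp: maj_def B_def intro: mult_nonneg_nonneg)
      finally show ?thesis using False by (simp add: x G_def)
    qed
  qed
  have "(\<lambda>x. norm ((\<lambda>((a,b),a'). c a' * w (a - a') / real a * e b * Phi a b) x)) summable_on (Sigma UNIV (\<lambda>(a,b). {..<a}))"
    by (rule summable_on_comparison_test[OF Gs le]) (simp_all only: norm_ge_zero)
  then show ?thesis by (rule abs_summable_summable)
qed


definition delta :: "nat \<Rightarrow> real" where "delta a = (if a = 0 then 1 else 0)"
definition Zs :: "(nat \<Rightarrow> real) \<Rightarrow> (nat \<Rightarrow> real) \<Rightarrow> real \<Rightarrow> bool" where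
  "Zs c e S \<longleftrightarrow> ((\<lambda>(a,b). c a * e b * CC a b) has_sum S) UNIV"

lemma maj_delta': "maj delta 1" using maj_delta by (simp add: delta_def[abs_def])

lemma CC_bnd: "1 \<le> a \<Longrightarrow> 1 \<le> b \<Longrightarrow> \<bar>CC a b\<bar> \<le> (real a+1) powr (-1/2) * (real b+1) powr (-1/2)"
  using CC_sq CC_nonneg by simp

lemma CC_bnd': "1 \<le> b \<Longrightarrow> 1 \<le> a \<Longrightarrow> \<bar>CC a b\<bar> \<le> (real b+1) powr (-1/2) * (real a+1) powr (-1/2)"
  using CC_bnd[of a b] by (simp add: mult.commute)

lemma swap_pair: "((\<lambda>(x,y). f x y) has_sum S) UNIV \<Longrightarrow> ((\<lambda>(y,x). f x y) has_sum S) UNIV"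
proof -
  assume h: "((\<lambda>(x,y). f x y) has_sum S) UNIV"
  have "((\<lambda>(x,y). f x y) has_sum S) (UNIV \<times> UNIV)" using h by simp
  then have "((\<lambda>(x,y). (\<lambda>(x,y). f x y) (y,x)) has_sum S) (UNIV \<times> UNIV)" by (subst (asm) has_sum_swap)
  then show ?thesis by simp
qed

lemma T1:
  assumes c: "maj c K" and e: "maj e K'" and c0: "c 0 = 0" and e0: "e 0 = 0"
  shows "\<exists>S. Zs (step sig1 c) e S \<and> Zs c (step sig1 e) S"
proof -
  obtain S1 where S1a: "((\<lambda>(a,b). step sig1 c a * e b * CC a b) has_sum S1) UNIV"
      and S1b: "((\<lambda>(a',b). c a' * e b * KI a' b) has_sum S1) UNIV"
  proof -
    have "\<exists>S. ((\<lambda>(a,b). step sig1 c a * e b * CC a b) has_sum S) UNIV \<and> ((\<lambda>(a',b). c a' * e b * KI a' b) has_sum S) UNIV"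
    proof (rule transport[OF triple_summ[OF c e e0 abs_sig1 CC_bnd]])
      fix a' b assume "c a' \<noteq> 0" "e b \<noteq> 0"
      then have "1 \<le> b" using e0 by (cases b) auto
      then show "((\<lambda>a. sig1 (a - a') * CC a b / real a) has_sum KI a' b) {a'<..}" by (rule inner_a)
    qed
    then show ?thesis using that by blast
  qed
  obtain S2 where S2a: "((\<lambda>(b,a). step sig1 e b * c a * CC a b) has_sum S2) UNIV"
      and S2b: "((\<lambda>(b',a). e b' * c a * KI a b') has_sum S2) UNIV"
  proof -
    have "\<exists>S. ((\<lambda>(b,a). step sig1 e b * c a * (\<lambda>b a. CC a b) b a) has_sum S) UNIV \<and>
              ((\<lambda>(b',a). e b' * c a * (\<lambda>b' a. KI a b') b' a) has_sum S) UNIV"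
    proof (rule transport[OF triple_summ[OF e c c0 abs_sig1 CC_bnd']])
      fix b' a assume "e b' \<noteq> 0" "c a \<noteq> 0"
      then have "1 \<le> a" using c0 by (cases a) auto
      then show "((\<lambda>b. sig1 (b - b') * CC a b / real b) has_sum KI a b') {b'<..}" by (rule inner_b)
    qed
    then show ?thesis using that by auto
  qed
  have S2b': "((\<lambda>(a',b). c a' * e b * KI a' b) has_sum S2) UNIV"
    using swap_pair[OF S2b] by (simp add: mult.commute)
  have "S1 = S2" using S1b S2b' by (rule has_sum_unique)
  moreover have "((\<lambda>(a,b). c a * step sig1 e b * CC a b) has_sum S2) UNIV"
    using swap_pair[OF S2a] by (simp add: mult.commute)
  ultimately show ?thesis using S1a unfolding Zs_def by auto
qed

lemma T0:
  assumes c: "maj c K" and e: "maj e K'" and e0: "e 0 = 0"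
  shows "\<exists>S. Zs (step sig0 c) e S \<and> Zs c (\<lambda>b. e b / (2 * real b)) S"
proof -
  have "\<exists>S. ((\<lambda>(a,b). step sig0 c a * e b * CC a b) has_sum S) UNIV \<and>
            ((\<lambda>(a',b). c a' * e b * (\<lambda>a' b. CC a' b / (2 * real b)) a' b) has_sum S) UNIV"
  proof (rule transport[OF triple_summ[OF c e e0 abs_sig0 CC_bnd]])
    fix a' b assume "c a' \<noteq> 0" "e b \<noteq> 0"
    then have "1 \<le> b" using e0 by (cases b) auto
    then show "((\<lambda>a. sig0 (a - a') * CC a b / real a) has_sum CC a' b / (2 * real b)) {a'<..}" by (rule inner_c)
  qed
  then obtain S where A: "((\<lambda>(a,b). step sig0 c a * e b * CC a b) has_sum S) UNIV"
     and B: "((\<lambda>(a',b). c a' * e b * (CC a' b / (2 * real b))) has_sum S) UNIV" by auto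
  have "(\<lambda>(a',b). c a' * e b * (CC a' b / (2 * real b))) = (\<lambda>(a,b). c a * (e b / (2 * real b)) * CC a b)"
    by (auto simp: fun_eq_iff)
  with A B show ?thesis unfolding Zs_def by auto
qed

lemma Zdelta: assumes "Zs delta E S" shows "(E has_sum S) UNIV"
proof -
  have h: "((\<lambda>(a,b). delta a * E b * CC a b) has_sum S) UNIV" using assms by (simp add: Zs_def)
  define h where "h b = (0::nat, b)" for b :: nat
  have inj: "inj_on h UNIV" by (auto simp: h_def inj_on_def)
  have "((\<lambda>(a,b). delta a * E b * CC a b) has_sum S) UNIV \<longleftrightarrow> ((\<lambda>(a,b). delta a * E b * CC a b) has_sum S) (h ` UNIV)"
    by (rule has_sum_cong_neutral) (auto simp: h_def delta_def)
  then have "((\<lambda>(a,b). delta a * E b * CC a b) has_sum S) (h ` UNIV)" using h by simp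
  then have "(((\<lambda>(a,b). delta a * E b * CC a b) \<circ> h) has_sum S) UNIV" by (subst (asm) has_sum_reindex[OF inj])
  then show ?thesis by (simp add: h_def o_def delta_def CC_def)
qed

lemma summ54': "summable (\<lambda>n. (real n + 1) powr (-5/4))"
proof -
  have "summable (\<lambda>n. real n powr (-5/4))" by (subst summable_real_powr_iff) simp
  then have "summable (\<lambda>n. real (Suc n) powr (-5/4))" by (subst summable_Suc_iff)
  then show ?thesis by (simp add: add.commute)
qed

lemma KI0_le: "KI a 0 \<le> 1/(real a+1)" using KI_le_PI[of a 0] by (simp add: PI_0)

lemma cKI_bound: assumes "maj c K" shows "\<bar>c a * KI a 0\<bar> \<le> K * (real a + 1) powr (-5/4)"
proof -
  have K: "0 \<le> K" using assms by (simp add: maj_def)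
  have "\<bar>c a * KI a 0\<bar> = \<bar>c a\<bar> * KI a 0" by (simp add: abs_mult KI_nonneg)
  also have "\<dots> \<le> (K * M a) * (real a + 1) powr (-1/2)"
  proof (rule mult_mono)
    show "\<bar>c a\<bar> \<le> K * M a" using assms by (simp add: maj_def)
    have "KI a 0 \<le> 1/(real a+1)" by (rule KI0_le)
    also have "1/(real a + 1) = (real a + 1) powr (-1)" by (simp add: powr_minus_divide)
    also have "\<dots> \<le> (real a + 1) powr (-1/2)" by (rule powr_mono) auto
    finally show "KI a 0 \<le> (real a + 1) powr (-1/2)" .
  qed (auto intro!: mult_nonneg_nonneg K less_imp_le[OF M_pos] KI_nonneg)
  also have "\<dots> = K * (real a + 1) powr (-5/4)"
    unfolding M_def by (simp add: mult.assoc powr_add[symmetric])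
  finally show ?thesis .
qed

lemma cKI_summable: assumes "maj c K" shows "summable (\<lambda>a. c a * KI a 0)"
proof (rule summable_comparison_test')
  show "summable (\<lambda>a. K * (real a + 1) powr (-5/4))" using summ54' by (rule summable_mult)
  show "norm (c a * KI a 0) \<le> K * (real a + 1) powr (-5/4)" for a using cKI_bound[OF assms] by simp
qed

lemma tau_formula:
  "\<exists>n. (\<Sum>a\<in>{a'<..N}. sig1 (a - a') / real a) = KI a' 0 - (-1)^n * KI (a' + 2*n) 0
        \<and> N \<le> a' + 2*n \<and> (a' \<le> N \<longrightarrow> a' + 2*n \<le> N + 1)"
proof (induction N)
  case 0
  show ?case by (rule exI[of _ 0]) simp
next
  case (Suc N)
  then obtain n where IH: "(\<Sum>a\<in>{a'<..N}. sig1 (a - a') / real a) = KI a' 0 - (-1)^n * KI (a' + 2*n) 0"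
     "N \<le> a' + 2*n" "a' \<le> N \<longrightarrow> a' + 2*n \<le> N + 1" by blast
  show ?case
  proof (cases "a' \<le> N")
    case False
    then have "{a'<..Suc N} = {}" by auto
    then show ?thesis using False by (intro exI[of _ 0]) auto
  next
    case True
    have set: "{a'<..Suc N} = insert (Suc N) {a'<..N}" using True by auto
    have split: "(\<Sum>a\<in>{a'<..Suc N}. sig1 (a - a') / real a) = (\<Sum>a\<in>{a'<..N}. sig1 (a - a') / real a) + sig1 (Suc N - a') / real (Suc N)"
      by (simp add: set)
    show ?thesis
    proof (cases "a' + 2*n = N")
      case False
      then have eq: "a' + 2*n = Suc N" using IH True by auto
      then have "Suc N - a' = 2*n" by simp
      then have "sig1 (Suc N - a') = 0" by (simp add: sig1_def)
      then show ?thesis using IH eq split by (intro exI[of _ n]) auto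
    next
      case True2: True
      then have "Suc N - a' = Suc (2*n)" by simp
      then have s: "sig1 (Suc N - a') = (-1)^n" by simp
      have "1 / real (Suc N) = PI (a' + 2*n) 0" using True2 by (simp add: PI_0 add.commute)
      also have "\<dots> = KI (a'+2*n) 0 + KI (a' + 2 * Suc n) 0" by (simp add: Kp)
      finally have e: "1 / real (Suc N) = KI (a'+2*n) 0 + KI (a' + 2 * Suc n) 0" .
      have "sig1 (Suc N - a') / real (Suc N) = (-1)^n * (1 / real (Suc N))" by (simp add: s)
      also have "\<dots> = (-1)^n * (KI (a'+2*n) 0 + KI (a' + 2 * Suc n) 0)" by (simp only: e)
      finally have "sig1 (Suc N - a') / real (Suc N) = (-1)^n * (KI (a'+2*n) 0 + KI (a' + 2 * Suc n) 0)" .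
      then have "(\<Sum>a\<in>{a'<..Suc N}. sig1 (a - a') / real a) = KI a' 0 - (-1)^(Suc n) * KI (a' + 2*Suc n) 0"
        using split IH(1) by (simp add: algebra_simps)
      then show ?thesis using True2 by (intro exI[of _ "Suc n"]) auto
    qed
  qed
qed

lemma tau_err: "\<bar>(\<Sum>a\<in>{a'<..N}. sig1 (a - a') / real a) - KI a' 0\<bar> \<le> 1 / (real N + 1)"
proof -
  obtain n where h: "(\<Sum>a\<in>{a'<..N}. sig1 (a - a') / real a) = KI a' 0 - (-1)^n * KI (a' + 2*n) 0"
     "N \<le> a' + 2*n" using tau_formula by blast
  have "\<bar>(\<Sum>a\<in>{a'<..N}. sig1 (a - a') / real a) - KI a' 0\<bar> = KI (a' + 2*n) 0" using h(1) by (simp add: abs_mult KI_nonneg)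
  also have "\<dots> \<le> 1/(real (a'+2*n) + 1)" by (rule KI0_le)
  also have "\<dots> \<le> 1 / (real N + 1)" using h(2) by (simp add: frac_le)
  finally show ?thesis .
qed

lemma swap_tri: fixes f :: "nat \<Rightarrow> nat \<Rightarrow> real" and N :: nat
  shows "(\<Sum>a\<le>N. \<Sum>a'<a. f a a') = (\<Sum>a'\<le>N. \<Sum>a\<in>{a'<..N}. f a a')"
proof (induction N)
  case 0 then show ?case by simp
next
  case (Suc N)
  have "(\<Sum>a'\<le>Suc N. \<Sum>a\<in>{a'<..Suc N}. f a a') = (\<Sum>a'\<le>N. \<Sum>a\<in>{a'<..Suc N}. f a a')"
    by simp
  also have "\<dots> = (\<Sum>a'\<le>N. (\<Sum>a\<in>{a'<..N}. f a a') + f (Suc N) a')"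
  proof (rule sum.cong)
    fix a' assume "a' \<in> {..N}"
    then have "{a'<..Suc N} = insert (Suc N) {a'<..N}" by auto
    then show "(\<Sum>a\<in>{a'<..Suc N}. f a a') = (\<Sum>a\<in>{a'<..N}. f a a') + f (Suc N) a'" by simp
  qed simp
  also have "\<dots> = (\<Sum>a\<le>N. \<Sum>a'<a. f a a') + (\<Sum>a'\<le>N. f (Suc N) a')" using Suc by (simp add: sum.distrib)
  finally show ?case by (simp add: lessThan_Suc_atMost)
qed

lemma M_lim: "(\<lambda>N. M (Suc N)) \<longlonglongrightarrow> 0"
  unfolding M_def by real_asymp

lemma boundary:
  assumes c: "maj c K"
  shows "(\<lambda>N. \<Sum>a\<le>N. step sig1 c a) \<longlonglongrightarrow> suminf (\<lambda>a. c a * KI a 0)"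
proof -
  have K: "0 \<le> K" using c by (simp add: maj_def)
  define tau where "tau a' N = (\<Sum>a\<in>{a'<..N}. sig1 (a - a') / real a)" for a' N
  have eq: "(\<Sum>a\<le>N. step sig1 c a) = (\<Sum>a'\<le>N. c a' * KI a' 0) + (\<Sum>a'\<le>N. c a' * (tau a' N - KI a' 0))" for N
  proof -
    have "(\<Sum>a\<le>N. step sig1 c a) = (\<Sum>a\<le>N. \<Sum>a'<a. c a' * sig1 (a - a') / real a)"
      by (simp add: step_def sum_divide_distrib)
    also have "\<dots> = (\<Sum>a'\<le>N. \<Sum>a\<in>{a'<..N}. c a' * sig1 (a - a') / real a)" by (rule swap_tri)
    also have "\<dots> = (\<Sum>a'\<le>N. c a' * tau a' N)" by (simp add: tau_def sum_distrib_left)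
    finally show ?thesis by (simp add: sum.distrib[symmetric] algebra_simps)
  qed
  have L1: "(\<lambda>N. \<Sum>a'\<le>N. c a' * KI a' 0) \<longlonglongrightarrow> suminf (\<lambda>a. c a * KI a 0)"
    by (rule summable_LIMSEQ'[OF cKI_summable[OF c]])
  have L2: "(\<lambda>N. \<Sum>a'\<le>N. c a' * (tau a' N - KI a' 0)) \<longlonglongrightarrow> 0"
  proof (rule Lim_null_comparison)
    have "(\<lambda>N. K * (8 * M (Suc N))) \<longlonglongrightarrow> K * (8 * 0)" by (intro tendsto_intros M_lim)
    then show "(\<lambda>N. K * (8 * M (Suc N))) \<longlonglongrightarrow> 0" by simp
    show "\<forall>\<^sub>F N in sequentially. norm (\<Sum>a'\<le>N. c a' * (tau a' N - KI a' 0)) \<le> K * (8 * M (Suc N))"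
    proof (rule always_eventually, rule allI)
      fix N
      have "norm (\<Sum>a'\<le>N. c a' * (tau a' N - KI a' 0)) \<le> (\<Sum>a'\<le>N. \<bar>c a' * (tau a' N - KI a' 0)\<bar>)"
        by (simp add: sum_abs)
      also have "\<dots> \<le> (\<Sum>a'\<le>N. K * M a' * (1 / (real N + 1)))"
      proof (rule sum_mono)
        fix a' assume "a' \<in> {..N}"
        have "\<bar>c a' * (tau a' N - KI a' 0)\<bar> = \<bar>c a'\<bar> * \<bar>tau a' N - KI a' 0\<bar>" by (simp add: abs_mult)
        also have "\<dots> \<le> (K * M a') * (1 / (real N + 1))"
          using c tau_err[of a' N] K by (intro mult_mono) (auto simp: maj_def tau_def intro: mult_nonneg_nonneg less_imp_le[OF M_pos])
        finally show "\<bar>c a' * (tau a' N - KI a' 0)\<bar> \<le> K * M a' * (1 / (real N + 1))" .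
      qed
      also have "\<dots> = K * ((\<Sum>a'<Suc N. M a') / real (Suc N))"
        by (simp add: sum_distrib_left sum_divide_distrib lessThan_Suc_atMost add.commute)
      also have "\<dots> \<le> K * (8 * M (Suc N))" using stepM[of "Suc N"] K by (intro mult_left_mono) auto
      finally show "norm (\<Sum>a'\<le>N. c a' * (tau a' N - KI a' 0)) \<le> K * (8 * M (Suc N))" .
    qed
  qed
  have "(\<lambda>N. (\<Sum>a'\<le>N. c a' * KI a' 0) + (\<Sum>a'\<le>N. c a' * (tau a' N - KI a' 0))) \<longlonglongrightarrow> suminf (\<lambda>a. c a * KI a 0) + 0"
    by (rule tendsto_add[OF L1 L2])
  then show ?thesis by (simp add: eq)
qed

lemma boundary_Z:
  assumes c: "maj c K" and c0: "c 0 = 0"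
  shows "Zs c (step sig1 delta) (suminf (\<lambda>a. c a * KI a 0))"
proof -
  have "\<exists>S. ((\<lambda>(b,a). step sig1 delta b * c a * (\<lambda>b a. CC a b) b a) has_sum S) UNIV \<and>
            ((\<lambda>(b',a). delta b' * c a * (\<lambda>b' a. KI a b') b' a) has_sum S) UNIV"
  proof (rule transport[OF triple_summ[OF maj_delta' c c0 abs_sig1 CC_bnd']])
    fix b' a assume "delta b' \<noteq> 0" "c a \<noteq> 0"
    then have "1 \<le> a" using c0 by (cases a) auto
    then show "((\<lambda>b. sig1 (b - b') * CC a b / real b) has_sum KI a b') {b'<..}" by (rule inner_b)
  qed
  then obtain S where A: "((\<lambda>(b,a). step sig1 delta b * c a * CC a b) has_sum S) UNIV"
     and B: "((\<lambda>(b',a). delta b' * c a * KI a b') has_sum S) UNIV" by auto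
  have "Zs delta (\<lambda>a. c a * KI a 0) S"
  proof -
    have "(\<lambda>(b',a). delta b' * c a * KI a b') = (\<lambda>(b',a). delta b' * (c a * KI a 0) * CC b' a)"
      by (auto simp: fun_eq_iff delta_def CC_def)
    then show ?thesis using B unfolding Zs_def by simp
  qed
  then have "((\<lambda>a. c a * KI a 0) has_sum S) UNIV" by (rule Zdelta)
  then have "S = suminf (\<lambda>a. c a * KI a 0)" by (metis has_sum_imp_sums sums_unique)
  moreover have "Zs c (step sig1 delta) S"
    using swap_pair[OF A] unfolding Zs_def by (simp add: mult.commute)
  ultimately show ?thesis by simp
qed


fun foldn :: "(nat \<times> bool) list \<Rightarrow> nat \<Rightarrow> (nat \<Rightarrow> real) \<Rightarrow> (nat \<Rightarrow> real)" where
  "foldn [] j h = h"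
| "foldn ((k,b) # ks) j h = foldn ks (Suc j)
     (\<lambda>n. (\<Sum>m<n. h m) * ((if b then (-1) ^ n else 1) / (2 * real n - real j) ^ k))"

lemma TP: "(\<Sum>m\<le>N. h m * Tpart ks j m N) = (\<Sum>n\<le>N. foldn ks j h n)"
proof (induction ks arbitrary: j h)
  case Nil then show ?case by simp
next
  case (Cons kb ks)
  obtain k b where kb: "kb = (k,b)" by (cases kb)
  define w where "w n = (if b then (-1) ^ n else 1) / (2 * real n - real j) ^ k" for n :: nat
  have "(\<Sum>m\<le>N. h m * Tpart (kb # ks) j m N) = (\<Sum>m\<le>N. \<Sum>n\<in>{m<..N}. h m * (w n * Tpart ks (Suc j) n N))"
    by (simp add: kb w_def sum_distrib_left)
  also have "\<dots> = (\<Sum>n\<le>N. \<Sum>m<n. h m * (w n * Tpart ks (Suc j) n N))"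
    by (rule swap_tri[symmetric])
  also have "\<dots> = (\<Sum>n\<le>N. ((\<Sum>m<n. h m) * w n) * Tpart ks (Suc j) n N)"
    by (simp add: sum_distrib_right mult.assoc)
  also have "\<dots> = (\<Sum>n\<le>N. foldn ks (Suc j) (\<lambda>n. (\<Sum>m<n. h m) * w n) n)" by (rule Cons.IH)
  finally show ?case by (simp add: kb w_def)
qed

lemma Tsum_foldn: "Tsum ks N = 2 ^ length ks * (\<Sum>n\<le>N. foldn ks 1 delta n)"
proof -
  have e: "delta m * Tpart ks 1 m N = (if m = 0 then Tpart ks 1 m N else 0)" for m by (simp add: delta_def)
  have "(\<Sum>m\<le>N. delta m * Tpart ks 1 m N) = Tpart ks 1 0 N"
    by (simp only: e sum.delta finite_atMost) simp
  then show ?thesis using TP[where N=N and h=delta and ks=ks and j=1] by (simp add: Tsum_def)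
qed

definition mstep :: "nat \<Rightarrow> bool \<Rightarrow> nat \<Rightarrow> (nat \<Rightarrow> real) \<Rightarrow> nat \<Rightarrow> real" where
  "mstep k b j G m = (\<Sum>m'<m. if odd (m - m') then G m' else 0) *
       ((if b then (-1) ^ ((m + j) div 2) else 1) / real m ^ k)"

fun mfold :: "(nat \<times> bool) list \<Rightarrow> nat \<Rightarrow> (nat \<Rightarrow> real) \<Rightarrow> (nat \<Rightarrow> real)" where
  "mfold [] j G = G"
| "mfold ((k,b) # ks) j G = mfold ks (Suc j) (mstep k b j G)"

definition corr :: "nat \<Rightarrow> (nat \<Rightarrow> real) \<Rightarrow> (nat \<Rightarrow> real) \<Rightarrow> bool" where
  "corr i F G \<longleftrightarrow> (\<forall>n. F n = (if i \<le> 2*n then G (2*n - i) else 0)) \<and> (\<forall>m. G m \<noteq> 0 \<longrightarrow> even (m + i) \<and> i \<le> m)"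

lemma corr0: "corr 0 delta delta" by (simp add: corr_def delta_def)

lemma par_eq: "(x::nat) + y = z \<Longrightarrow> even z \<longleftrightarrow> (even x \<longleftrightarrow> even y)" by auto

lemma sum_odd_reindex:
  fixes G :: "nat \<Rightarrow> real"
  assumes A: "Suc i \<le> 2*n"
  shows "(\<Sum>m'<2*n - Suc i. if odd (2*n - Suc i - m') then G m' else 0)
       = (\<Sum>n'<n. if i \<le> 2*n' then G (2*n' - i) else 0)"
proof -
  define m where "m = 2*n - Suc i"
  have n1: "2*n - 1 = Suc (2*(n-1))" using A by arith
  have oddm: "odd (m + i)" using A n1 unfolding m_def by (simp add: Suc_diff_Suc)
  have key: "odd (m - m') \<longleftrightarrow> even (m' + i)" if "m' < m" for m'
  proof -
    have "(m - m') + (m' + i) = m + i" using that by arith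
    then show ?thesis using oddm par_eq by blast
  qed
  have L: "(\<Sum>m'<m. if odd (m - m') then G m' else 0) = (\<Sum>m'\<in>{m'. m' < m \<and> even (m' + i)}. G m')"
  proof -
    have "(\<Sum>m'<m. if odd (m - m') then G m' else 0) = (\<Sum>m'\<in>{..<m} \<inter> {m'. odd (m - m')}. G m')"
      by (simp add: sum.inter_restrict)
    also have "{..<m} \<inter> {m'. odd (m - m')} = {m'. m' < m \<and> even (m' + i)}"
      using key by blast
    finally show ?thesis .
  qed
  have R: "(\<Sum>n'<n. if i \<le> 2*n' then G (2*n' - i) else 0) = (\<Sum>n'\<in>{n'. n' < n \<and> i \<le> 2*n'}. G (2*n' - i))"
  proof -
    have "(\<Sum>n'<n. if i \<le> 2*n' then G (2*n' - i) else 0) = (\<Sum>n'\<in>{..<n} \<inter> {n'. i \<le> 2*n'}. G (2*n' - i))"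
      by (simp add: sum.inter_restrict)
    also have "{..<n} \<inter> {n'. i \<le> 2*n'} = {n'. n' < n \<and> i \<le> 2*n'}" by blast
    finally show ?thesis .
  qed
  have bij: "bij_betw (\<lambda>n'. 2*n' - i) {n'. n' < n \<and> i \<le> 2*n'} {m'. m' < m \<and> even (m' + i)}"
  proof (rule bij_betwI[where g="\<lambda>m'. (m' + i) div 2"])
    show "(\<lambda>n'. 2*n' - i) \<in> {n'. n' < n \<and> i \<le> 2*n'} \<rightarrow> {m'. m' < m \<and> even (m' + i)}"
    proof
      fix n' assume h: "n' \<in> {n'. n' < n \<and> i \<le> 2*n'}"
      then have "2*n' - i < m" "2*n' - i + i = 2*n'" unfolding m_def by auto
      then show "2*n' - i \<in> {m'. m' < m \<and> even (m' + i)}" by simp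
    qed
    show "(\<lambda>m'. (m' + i) div 2) \<in> {m'. m' < m \<and> even (m' + i)} \<rightarrow> {n'. n' < n \<and> i \<le> 2*n'}"
    proof
      fix m' assume h: "m' \<in> {m'. m' < m \<and> even (m' + i)}"
      then have "even (m' + i)" by blast
      then obtain u where u: "m' + i = 2*u" by (rule evenE)
      have "u < n" "i \<le> 2*u" using h u A unfolding m_def by auto
      then show "(m' + i) div 2 \<in> {n'. n' < n \<and> i \<le> 2*n'}" using u by simp
    qed
    fix n' assume "n' \<in> {n'. n' < n \<and> i \<le> 2*n'}"
    then have "2*n' - i + i = 2*n'" by auto
    then show "(2*n' - i + i) div 2 = n'" by simp
  next
    fix m' assume h: "m' \<in> {m'. m' < m \<and> even (m' + i)}"
    then have "even (m' + i)" by blast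
      then obtain u where u: "m' + i = 2*u" by (rule evenE)
    then show "2 * ((m' + i) div 2) - i = m'" by simp
  qed
  have "(\<Sum>n'\<in>{n'. n' < n \<and> i \<le> 2*n'}. G (2*n' - i)) = (\<Sum>m'\<in>{m'. m' < m \<and> even (m' + i)}. G m')"
    by (rule sum.reindex_bij_betw[OF bij])
  then show ?thesis using L R by (simp add: m_def)
qed

lemma corr_step:
  assumes c: "corr i F G"
  shows "corr (Suc i) (\<lambda>n. (\<Sum>m<n. F m) * ((if b then (-1) ^ n else 1) / (2 * real n - real (Suc i)) ^ k))
                     (mstep k b (Suc i) G)"
  unfolding corr_def
proof (rule conjI; intro allI impI)
  fix n
  show "(\<Sum>m<n. F m) * ((if b then (-1) ^ n else 1) / (2 * real n - real (Suc i)) ^ k) =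
        (if Suc i \<le> 2 * n then mstep k b (Suc i) G (2 * n - Suc i) else 0)"
  proof (cases "Suc i \<le> 2*n")
    case True
    have s: "(\<Sum>m<n. F m) = (\<Sum>n'<n. if i \<le> 2*n' then G (2*n' - i) else 0)"
      using c by (simp add: corr_def)
    have d: "(2 * n - Suc i + Suc i) div 2 = n" using True by simp
    have r: "real (2 * n - Suc i) = 2 * real n - real (Suc i)" using True by (simp add: of_nat_diff)
    have "mstep k b (Suc i) G (2*n - Suc i) = (\<Sum>m'<2*n - Suc i. if odd (2*n - Suc i - m') then G m' else 0) *
        ((if b then (-1) ^ ((2*n - Suc i + Suc i) div 2) else 1) / real (2*n - Suc i) ^ k)"
      by (rule mstep_def)
    also have "\<dots> = (\<Sum>n'<n. if i \<le> 2*n' then G (2*n' - i) else 0) *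
        ((if b then (-1) ^ n else 1) / (2 * real n - real (Suc i)) ^ k)"
      by (simp only: sum_odd_reindex[OF True] d r)
    also have "\<dots> = (\<Sum>m<n. F m) * ((if b then (-1) ^ n else 1) / (2 * real n - real (Suc i)) ^ k)"
      by (simp only: s)
    finally show ?thesis using True by simp
  next
    case False
    have "F m = 0" if "m < n" for m using c that False by (simp add: corr_def)
    then show ?thesis using False by simp
  qed
next
  fix m assume "mstep k b (Suc i) G m \<noteq> 0"
  then have "(\<Sum>m'<m. if odd (m - m') then G m' else 0) \<noteq> 0" by (auto simp: mstep_def)
  then obtain m' where "m' \<in> {..<m}" "(if odd (m - m') then G m' else 0) \<noteq> 0"
    by (rule sum.not_neutral_contains_not_neutral)
  then have h1: "m' < m" and h2: "odd (m - m')" and h3: "G m' \<noteq> 0" by (auto split: if_splits)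
  have h4: "even (m' + i)" and h5: "i \<le> m'" using c h3 by (auto simp: corr_def)
  have eq: "(m - m') + (m' + i) + 1 = m + Suc i" using h1 by arith
  have "even ((m - m') + (m' + i) + 1)" using h2 h4 by simp
  then have "even (m + Suc i)" by (simp only: eq)
  moreover have "Suc i \<le> m" using h1 h5 by arith
  ultimately show "even (m + Suc i) \<and> Suc i \<le> m" by blast
qed

lemma corr_fold: "corr i F G \<Longrightarrow> corr (i + length ks) (foldn ks (Suc i) F) (mfold ks (Suc i) G)"
proof (induction ks arbitrary: i F G)
  case Nil then show ?case by simp
next
  case (Cons kb ks)
  obtain k b where kb: "kb = (k,b)" by (cases kb)
  show ?case using Cons.IH[OF corr_step[OF Cons.prems, of b k]] by (simp add: kb)
qed

lemma corr_sum:
  assumes c: "corr i F G" and iN: "i \<le> 2*N"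
  shows "(\<Sum>n\<le>N. F n) = (\<Sum>m\<le>2*N - i. G m)"
proof -
  have "(\<Sum>n\<le>N. F n) = (\<Sum>n\<in>{..N} \<inter> {n. i \<le> 2*n}. G (2*n - i))"
    using c by (simp add: corr_def sum.inter_restrict)
  also have "\<dots> = (\<Sum>m\<in>{m. m \<le> 2*N - i \<and> even (m + i)}. G m)"
  proof (rule sum.reindex_bij_betw)
    show "bij_betw (\<lambda>n. 2*n - i) ({..N} \<inter> {n. i \<le> 2*n}) {m. m \<le> 2*N - i \<and> even (m + i)}"
    proof (rule bij_betwI[where g="\<lambda>m. (m + i) div 2"])
      show "(\<lambda>n. 2*n - i) \<in> {..N} \<inter> {n. i \<le> 2*n} \<rightarrow> {m. m \<le> 2*N - i \<and> even (m + i)}"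
      proof
        fix n assume h: "n \<in> {..N} \<inter> {n. i \<le> 2*n}"
        then have "2*n - i \<le> 2*N - i" "2*n - i + i = 2*n" by auto
        then show "2*n - i \<in> {m. m \<le> 2*N - i \<and> even (m + i)}" by simp
      qed
      show "(\<lambda>m. (m + i) div 2) \<in> {m. m \<le> 2*N - i \<and> even (m + i)} \<rightarrow> {..N} \<inter> {n. i \<le> 2*n}"
      proof
        fix m assume h: "m \<in> {m. m \<le> 2*N - i \<and> even (m + i)}"
        then have "even (m + i)" by blast
      then obtain u where u: "m + i = 2*u" by (rule evenE)
        have "u \<le> N" "i \<le> 2*u" using h u iN by auto
        then show "(m + i) div 2 \<in> {..N} \<inter> {n. i \<le> 2*n}" using u by simp
      qed
      fix n assume "n \<in> {..N} \<inter> {n. i \<le> 2*n}"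
      then have "2*n - i + i = 2*n" by auto
      then show "(2*n - i + i) div 2 = n" by simp
    next
      fix m assume h: "m \<in> {m. m \<le> 2*N - i \<and> even (m + i)}"
      then have "even (m + i)" by blast
      then obtain u where u: "m + i = 2*u" by (rule evenE)
      then show "2 * ((m + i) div 2) - i = m" by simp
    qed
  qed
  also have "\<dots> = (\<Sum>m\<le>2*N - i. G m)"
  proof (rule sum.mono_neutral_left)
    show "\<forall>m\<in>{..2*N - i} - {m. m \<le> 2*N - i \<and> even (m + i)}. G m = 0" using c by (auto simp: corr_def)
  qed auto
  finally show ?thesis .
qed


definition sgnj :: "nat \<Rightarrow> nat \<Rightarrow> real" where "sgnj j m = (-1) ^ ((m + j) div 2)"
definition supp :: "(nat \<Rightarrow> real) \<Rightarrow> nat \<Rightarrow> bool" where "supp H i \<longleftrightarrow> (\<forall>m. H m \<noteq> 0 \<longrightarrow> even (m + i))"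

lemma sig0_even: "even d \<Longrightarrow> sig0 d = 0" by (simp add: sig0_def)
lemma sig1_even: "even d \<Longrightarrow> sig1 d = 0" by (simp add: sig1_def)

lemma mstep_F: "mstep 1 False j G = step sig0 G"
proof (rule ext)
  fix m
  have "(\<Sum>m'<m. if odd (m - m') then G m' else 0) = (\<Sum>m'<m. G m' * sig0 (m - m'))"
    by (rule sum.cong) (auto simp: sig0_def)
  then show "mstep 1 False j G m = step sig0 G m" by (simp add: mstep_def step_def)
qed

lemma mstep_T1: "mstep 1 True j G = (\<lambda>m. sgnj j m * step sig0 G m)"
proof (rule ext)
  fix m
  have "(\<Sum>m'<m. if odd (m - m') then G m' else 0) = (\<Sum>m'<m. G m' * sig0 (m - m'))"
    by (rule sum.cong) (auto simp: sig0_def)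
  then show "mstep 1 True j G m = sgnj j m * step sig0 G m" by (simp add: mstep_def step_def sgnj_def)
qed

lemma par: assumes "even (m' + i)" "m' < m" "odd (m - m')"
  shows "sgnj i m' = - (sgnj (Suc i) m * sig1 (m - m'))"
proof -
  obtain u where u: "m' + i = 2*u" using assms(1) by (rule evenE)
  obtain w where w: "m - m' = 2*w + 1" using assms(3) by (rule oddE)
  have e1: "(m' + i) div 2 = u" using u by simp
  have "m + Suc i = 2*(u + w + 1)" using u w assms(2) by arith
  then have e2: "(m + Suc i) div 2 = u + w + 1" by simp
  have e3: "sig1 (m - m') = (-1)^w" using w by (simp add: sig1_def)
  have ww: "(-1::real)^w * (-1)^w = 1" by (simp add: power_mult_distrib[symmetric])
  have "(-1::real)^(u + w + 1) * (-1)^w = - ((-1)^u * ((-1)^w * (-1)^w))" by (simp add: power_add algebra_simps)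
  then have "(-1::real)^u = - ((-1)^(u + w + 1) * (-1)^w)" using ww by simp
  then show ?thesis unfolding sgnj_def e1 e2 e3 .
qed

lemma sgnj_sq: "sgnj j m * sgnj j m = 1" by (simp add: sgnj_def power_mult_distrib[symmetric])

lemma term_eq:
  assumes H: "supp H i" and mm: "m' < m"
  shows "(if odd (m - m') then e * sgnj i m' * H m' else 0) = - e * sgnj (Suc i) m * (H m' * sig1 (m - m'))"
proof (cases "odd (m - m') \<and> H m' \<noteq> 0")
  case True
  then have "even (m' + i)" using H by (simp add: supp_def)
  then have "sgnj i m' = - (sgnj (Suc i) m * sig1 (m - m'))" using par mm True by blast
  then show ?thesis using True by (simp add: algebra_simps)
next
  case False
  then show ?thesis by (auto simp: sig1_even)
qed

lemma S2: assumes H: "supp H i"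
  shows "mstep 1 False (Suc i) (\<lambda>m. e * sgnj i m * H m) = (\<lambda>m. - e * sgnj (Suc i) m * step sig1 H m)"
proof (rule ext)
  fix m
  have "(\<Sum>m'<m. if odd (m - m') then e * sgnj i m' * H m' else 0) = (\<Sum>m'<m. - e * sgnj (Suc i) m * (H m' * sig1 (m - m')))"
  proof (rule sum.cong)
    fix m' assume "m' \<in> {..<m}"
    then show "(if odd (m - m') then e * sgnj i m' * H m' else 0) = - e * sgnj (Suc i) m * (H m' * sig1 (m - m'))"
      by (intro term_eq[OF H]) simp
  qed simp
  also have "\<dots> = - e * sgnj (Suc i) m * (\<Sum>m'<m. H m' * sig1 (m - m'))" by (simp add: sum_distrib_left)
  finally show "mstep 1 False (Suc i) (\<lambda>m. e * sgnj i m * H m) m = - e * sgnj (Suc i) m * step sig1 H m"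
    by (simp add: mstep_def step_def)
qed

lemma S3: assumes H: "supp H i" and q: "1 \<le> q"
  shows "mstep q True (Suc i) (\<lambda>m. e * sgnj i m * H m) = (\<lambda>m. - e * (step sig1 H m / real m ^ (q - 1)))"
proof (rule ext)
  fix m
  have s: "(\<Sum>m'<m. if odd (m - m') then e * sgnj i m' * H m' else 0) = - e * sgnj (Suc i) m * (\<Sum>m'<m. H m' * sig1 (m - m'))"
  proof -
    have "(\<Sum>m'<m. if odd (m - m') then e * sgnj i m' * H m' else 0) = (\<Sum>m'<m. - e * sgnj (Suc i) m * (H m' * sig1 (m - m')))"
    proof (rule sum.cong)
      fix m' assume "m' \<in> {..<m}"
      then show "(if odd (m - m') then e * sgnj i m' * H m' else 0) = - e * sgnj (Suc i) m * (H m' * sig1 (m - m'))"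
        by (intro term_eq[OF H]) simp
    qed simp
    also have "\<dots> = - e * sgnj (Suc i) m * (\<Sum>m'<m. H m' * sig1 (m - m'))" by (simp add: sum_distrib_left)
    finally show ?thesis .
  qed
  have qq: "real m ^ q = real m * real m ^ (q - 1)" using q by (cases q) auto
  have "mstep q True (Suc i) (\<lambda>m. e * sgnj i m * H m) m
      = (- e * sgnj (Suc i) m * (\<Sum>m'<m. H m' * sig1 (m - m'))) * (sgnj (Suc i) m / real m ^ q)"
    by (simp only: mstep_def s if_True sgnj_def[symmetric] add_Suc_right[symmetric])
  also have "\<dots> = - e * (sgnj (Suc i) m * sgnj (Suc i) m) * ((\<Sum>m'<m. H m' * sig1 (m - m')) / real m ^ q)"
    by (simp add: algebra_simps)
  also have "\<dots> = - e * ((\<Sum>m'<m. H m' * sig1 (m - m')) / real m ^ q)" by (simp add: sgnj_sq)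
  also have "\<dots> = - e * (step sig1 H m / real m ^ (q - 1))" by (simp add: step_def qq)
  finally show "mstep q True (Suc i) (\<lambda>m. e * sgnj i m * H m) m = - e * (step sig1 H m / real m ^ (q - 1))" .
qed

lemma supp_step: assumes H: "supp H i" and w: "\<And>d. even d \<Longrightarrow> w d = 0"
  shows "supp (step w H) (Suc i)"
  unfolding supp_def
proof (intro allI impI)
  fix m assume "step w H m \<noteq> 0"
  then have "(\<Sum>m'<m. H m' * w (m - m')) \<noteq> 0" by (auto simp: step_def)
  then obtain m' where "m' \<in> {..<m}" "H m' * w (m - m') \<noteq> 0"
    by (rule sum.not_neutral_contains_not_neutral)
  then have h1: "m' < m" and h3: "H m' \<noteq> 0" and hw: "w (m - m') \<noteq> 0" by auto
  have h2: "odd (m - m')"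
  proof (rule ccontr)
    assume "\<not> odd (m - m')"
    then have "w (m - m') = 0" using w by simp
    then show False using hw by simp
  qed
  have h4: "even (m' + i)" using H h3 by (simp add: supp_def)
  have eq: "(m - m') + (m' + i) + 1 = m + Suc i" using h1 by arith
  have "even ((m - m') + (m' + i) + 1)" using h2 h4 by simp
  then show "even (m + Suc i)" by (simp only: eq)
qed

lemma supp_iter: "supp H i \<Longrightarrow> (\<And>d. even d \<Longrightarrow> w d = 0) \<Longrightarrow> supp ((step w ^^ k) H) (i + k)"
  by (induction k) (auto intro: supp_step)

lemma supp_delta: "supp delta 0" by (simp add: supp_def delta_def)

lemma mfold_append: "mfold (xs @ ys) j G = mfold ys (j + length xs) (mfold xs j G)"
proof (induction xs arbitrary: j G)
  case Nil then show ?case by simp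
next
  case (Cons kb xs)
  obtain k b where kb: "kb = (k,b)" by (cases kb)
  show ?case using Cons.IH by (simp add: kb)
qed

lemma rep_plain: "mfold (replicate k (1, False)) j G = (step sig0 ^^ k) G"
proof (induction k arbitrary: j G)
  case 0 then show ?case by simp
next
  case (Suc k)
  have "mfold (replicate (Suc k) (1, False)) j G = mfold (replicate k (1, False)) (Suc j) (mstep 1 False j G)"
    by (simp only: replicate_Suc mfold.simps)
  also have "\<dots> = (step sig0 ^^ k) (step sig0 G)" by (simp only: Suc.IH mstep_F)
  also have "\<dots> = (step sig0 ^^ Suc k) G" by (simp only: funpow_Suc_right o_apply)
  finally show ?case .
qed

lemma rep_sign: "supp H i \<Longrightarrow> mfold (replicate k (1, False)) (Suc i) (\<lambda>m. e * sgnj i m * H m)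
    = (\<lambda>m. (e * (-1)^k) * sgnj (i + k) m * (step sig1 ^^ k) H m)"
proof (induction k arbitrary: i e H)
  case 0 then show ?case by simp
next
  case (Suc k)
  have s: "supp (step sig1 H) (Suc i)" by (rule supp_step[OF Suc.prems]) (simp add: sig1_even)
  have "mfold (replicate (Suc k) (1, False)) (Suc i) (\<lambda>m. e * sgnj i m * H m)
      = mfold (replicate k (1, False)) (Suc (Suc i)) (\<lambda>m. (- e) * sgnj (Suc i) m * step sig1 H m)"
    by (simp only: replicate_Suc mfold.simps S2[OF Suc.prems])
  also have "\<dots> = (\<lambda>m. (- e * (-1)^k) * sgnj (Suc i + k) m * (step sig1 ^^ k) (step sig1 H) m)"
    by (rule Suc.IH[OF s])
  also have "\<dots> = (\<lambda>m. (e * (-1)^Suc k) * sgnj (i + Suc k) m * (step sig1 ^^ Suc k) H m)"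
    by (simp only: funpow_Suc_right o_apply add_Suc_right add_Suc power_Suc mult_minus1 mult_minus_left mult_minus_right mult_1)
  finally show ?case .
qed

lemma delta_sgn: "delta = (\<lambda>m. 1 * sgnj 0 m * delta m)"
  by (auto simp: delta_def sgnj_def)

lemma mfold_L:
  assumes r: "1 \<le> r"
  shows "mfold (replicate p' (1, False) @ [(1, True)] @ replicate (r - 1) (1, False) @ [(1, True)]) 1 delta
       = (\<lambda>m. (-1)^r * (step sig1 ^^ r) ((step sig0 ^^ Suc p') delta) m)"
proof -
  define A where "A = (step sig0 ^^ Suc p') delta"
  have sA: "supp A (Suc p')" unfolding A_def using supp_iter[OF supp_delta, of sig0 "Suc p'"] by (simp add: sig0_even)
  have m1: "mfold (replicate p' (1, False)) 1 delta = (step sig0 ^^ p') delta" by (rule rep_plain)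
  have m2: "mfold [(1, True)] (1 + p') ((step sig0 ^^ p') delta) = (\<lambda>m. 1 * sgnj (Suc p') m * A m)"
    by (simp only: mfold.simps mstep_T1 A_def funpow.simps(2) o_apply plus_1_eq_Suc mult_1)
  have m3: "mfold (replicate (r - 1) (1, False)) (Suc (Suc p')) (\<lambda>m. 1 * sgnj (Suc p') m * A m)
      = (\<lambda>m. (1 * (-1)^(r-1)) * sgnj (Suc p' + (r - 1)) m * (step sig1 ^^ (r-1)) A m)"
    by (rule rep_sign[OF sA])
  have sB: "supp ((step sig1 ^^ (r-1)) A) (Suc p' + (r - 1))"
    by (rule supp_iter[OF sA]) (simp add: sig1_even)
  have m4: "mfold [(1, True)] (Suc (Suc p' + (r - 1))) (\<lambda>m. (1 * (-1)^(r-1)) * sgnj (Suc p' + (r - 1)) m * (step sig1 ^^ (r-1)) A m)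
      = (\<lambda>m. - (1 * (-1)^(r-1)) * (step sig1 ((step sig1 ^^ (r-1)) A) m / real m ^ (1 - 1)))"
    using S3[OF sB, of 1 "1 * (-1)^(r-1)"] by simp
  have l1: "length [(1::nat, True)] = 1" by simp
  have p2: "1 + p' + 1 = Suc (Suc p')" and p3: "Suc (Suc p') + (r - 1) = Suc (Suc p' + (r - 1))" by simp_all
  have "mfold (replicate p' (1, False) @ [(1, True)] @ replicate (r - 1) (1, False) @ [(1, True)]) 1 delta
      = mfold [(1, True)] (1 + p' + 1 + (r - 1)) (mfold (replicate (r - 1) (1, False)) (1 + p' + 1)
          (mfold [(1, True)] (1 + p') (mfold (replicate p' (1, False)) 1 delta)))"
    by (simp only: mfold_append length_replicate l1)
  also have "\<dots> = (\<lambda>m. - (1 * (-1)^(r-1)) * (step sig1 ((step sig1 ^^ (r-1)) A) m / real m ^ (1 - 1)))"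
    by (simp only: m1 m2 p2 m3 p3 m4)
  also have "\<dots> = (\<lambda>m. (-1)^r * (step sig1 ^^ r) A m)"
  proof -
    obtain r' where r': "r = Suc r'" using r by (cases r) auto
    have "(step sig1 ^^ r) A = step sig1 ((step sig1 ^^ (r-1)) A)" by (simp add: r')
    moreover have "- ((-1::real)^(r-1)) = (-1)^r" by (simp add: r')
    ultimately show ?thesis by simp
  qed
  finally show ?thesis by (simp add: A_def)
qed

lemma mfold_R:
  assumes r: "1 \<le> r"
  shows "mfold (replicate (r - 1) (1, False) @ [(Suc p, True)]) 1 delta
       = (\<lambda>m. (-1)^r * ((step sig1 ^^ r) delta m / real m ^ p))"
proof -
  have m3: "mfold (replicate (r - 1) (1, False)) (Suc 0) (\<lambda>m. 1 * sgnj 0 m * delta m)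
      = (\<lambda>m. (1 * (-1)^(r-1)) * sgnj (0 + (r - 1)) m * (step sig1 ^^ (r-1)) delta m)"
    by (rule rep_sign[OF supp_delta])
  have sB: "supp ((step sig1 ^^ (r-1)) delta) (0 + (r - 1))"
    by (rule supp_iter[OF supp_delta]) (simp add: sig1_even)
  have m4: "mfold [(Suc p, True)] (Suc (0 + (r - 1))) (\<lambda>m. (1 * (-1)^(r-1)) * sgnj (0 + (r - 1)) m * (step sig1 ^^ (r-1)) delta m)
      = (\<lambda>m. - (1 * (-1)^(r-1)) * (step sig1 ((step sig1 ^^ (r-1)) delta) m / real m ^ (Suc p - 1)))"
    using S3[OF sB, of "Suc p" "1 * (-1)^(r-1)"] by simp
  have q1: "1 + (r - 1) = Suc (0 + (r - 1))" and q0: "(1::nat) = Suc 0" by simp_all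
  have "mfold (replicate (r - 1) (1, False) @ [(Suc p, True)]) 1 delta
      = mfold [(Suc p, True)] (1 + (r - 1)) (mfold (replicate (r - 1) (1, False)) 1 delta)"
    by (simp only: mfold_append length_replicate)
  also have "\<dots> = mfold [(Suc p, True)] (Suc (0 + (r - 1))) (mfold (replicate (r - 1) (1, False)) (Suc 0) (\<lambda>m. 1 * sgnj 0 m * delta m))"
    by (simp only: q1) (simp only: q0 delta_sgn[symmetric])
  also have "\<dots> = (\<lambda>m. - (1 * (-1)^(r-1)) * (step sig1 ((step sig1 ^^ (r-1)) delta) m / real m ^ (Suc p - 1)))"
    by (simp only: m3 m4)
  also have "\<dots> = (\<lambda>m. (-1)^r * ((step sig1 ^^ r) delta m / real m ^ p))"
  proof -
    obtain r' where r': "r = Suc r'" using r by (cases r) auto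
    have "(step sig1 ^^ r) delta = step sig1 ((step sig1 ^^ (r-1)) delta)" by (simp add: r')
    moreover have "- ((-1::real)^(r-1)) = (-1)^r" by (simp add: r')
    ultimately show ?thesis by simp
  qed
  finally show ?thesis .
qed


lemma maj_iter: "maj c K \<Longrightarrow> (\<And>d. \<bar>w d\<bar> \<le> 1) \<Longrightarrow> maj ((step w ^^ j) c) (8^j * K)"
proof (induction j)
  case 0 then show ?case by simp
next
  case (Suc j)
  have "maj (step w ((step w ^^ j) c)) (8 * (8^j * K))" by (rule maj_step[OF Suc.IH[OF Suc.prems] Suc.prems(2)])
  then show ?case by (simp add: mult.assoc)
qed

lemma zero_iter: "c 0 = 0 \<Longrightarrow> (step w ^^ j) c 0 = 0" by (cases j) auto

lemma Zs_unique: "Zs c e S \<Longrightarrow> Zs c e S' \<Longrightarrow> S = S'" unfolding Zs_def by (rule has_sum_unique)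

lemma T1_iter: "maj c K \<Longrightarrow> maj e K' \<Longrightarrow> c 0 = 0 \<Longrightarrow> e 0 = 0 \<Longrightarrow> Zs ((step sig1 ^^ j) c) e S \<Longrightarrow> Zs c ((step sig1 ^^ j) e) S"
proof (induction j arbitrary: c K)
  case 0 then show ?case by simp
next
  case (Suc j)
  have a: "Zs ((step sig1 ^^ j) (step sig1 c)) e S" using Suc.prems(5) by (simp only: funpow_Suc_right o_apply)
  have b: "Zs (step sig1 c) ((step sig1 ^^ j) e) S"
    by (rule Suc.IH[OF maj_step[OF Suc.prems(1) abs_sig1] Suc.prems(2) step_0 Suc.prems(4) a])
  obtain S' where S': "Zs (step sig1 c) ((step sig1 ^^ j) e) S'" "Zs c (step sig1 ((step sig1 ^^ j) e)) S'"
    using T1[OF Suc.prems(1) maj_iter[OF Suc.prems(2) abs_sig1, of j] Suc.prems(3) zero_iter[where c=e and w=sig1 and j=j, OF Suc.prems(4)]] by blast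
  have "S' = S" using S'(1) b by (rule Zs_unique)
  then show ?case using S'(2) by simp
qed

lemma div2_le: "\<bar>(e::real) / (2 * real b)\<bar> \<le> \<bar>e\<bar>"
proof (cases "b = 0")
  case False
  then have "1 \<le> 2 * real b" by simp
  then show ?thesis by (simp add: abs_div divide_le_eq abs_mult) (simp add: mult_le_cancel_left1)
qed simp

lemma T0_iter: "maj e K' \<Longrightarrow> e 0 = 0 \<Longrightarrow> Zs ((step sig0 ^^ j) delta) e S \<Longrightarrow> Zs delta (\<lambda>b. e b / (2 * real b) ^ j) S"
proof (induction j arbitrary: e K')
  case 0 then show ?case by simp
next
  case (Suc j)
  have a: "Zs (step sig0 ((step sig0 ^^ j) delta)) e S" using Suc.prems(3) by simp
  obtain S' where S': "Zs (step sig0 ((step sig0 ^^ j) delta)) e S'" "Zs ((step sig0 ^^ j) delta) (\<lambda>b. e b / (2 * real b)) S'"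
    using T0[OF maj_iter[where w=sig0 and j=j, OF maj_delta' abs_sig0] Suc.prems(1) Suc.prems(2)] by blast
  have "S' = S" using S'(1) a by (rule Zs_unique)
  then have c: "Zs ((step sig0 ^^ j) delta) (\<lambda>b. e b / (2 * real b)) S" using S'(2) by simp
  have m: "maj (\<lambda>b. e b / (2 * real b)) K'" by (rule maj_le[OF Suc.prems(1)]) (rule div2_le)
  have "Zs delta (\<lambda>b. (\<lambda>b. e b / (2 * real b)) b / (2 * real b) ^ j) S"
    by (rule Suc.IH[OF m _ c]) (simp add: Suc.prems(2))
  moreover have "(\<lambda>b. (\<lambda>b. e b / (2 * real b)) b / (2 * real b) ^ j) = (\<lambda>b. e b / (2 * real b) ^ Suc j)"
    by (simp add: divide_divide_eq_left)
  ultimately show ?case by simp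
qed

lemma filterlim_2N: "filterlim (\<lambda>N::nat. 2*N - d) sequentially sequentially"
  unfolding filterlim_at_top eventually_sequentially
proof
  fix Z :: nat
  show "\<exists>N. \<forall>n\<ge>N. Z \<le> 2*n - d" by (rule exI[of _ "Z + d"]) auto
qed

lemma lim_compose:
  fixes PS T :: "nat \<Rightarrow> real" and C L :: real
  assumes PS: "PS \<longlonglongrightarrow> L" and T: "\<And>N. d \<le> 2*N \<Longrightarrow> T N = C * PS (2*N - d)"
  shows "T \<longlonglongrightarrow> C * L"
proof -
  have "(\<lambda>N. PS (2*N - d)) \<longlonglongrightarrow> L" by (rule filterlim_compose[OF PS filterlim_2N])
  then have "(\<lambda>N. C * PS (2*N - d)) \<longlonglongrightarrow> C * L" by (rule tendsto_mult[OF tendsto_const])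
  moreover have "\<forall>\<^sub>F N in sequentially. C * PS (2*N - d) = T N"
    unfolding eventually_sequentially by (rule exI[of _ d]) (simp add: T)
  ultimately show ?thesis by (rule Lim_transform_eventually)
qed

lemma Tsum_eq: "length ks \<le> 2*N \<Longrightarrow> Tsum ks N = 2 ^ length ks * (\<Sum>m\<le>2*N - length ks. mfold ks 1 delta m)"
proof -
  assume h: "length ks \<le> 2*N"
  have c: "corr (length ks) (foldn ks 1 delta) (mfold ks 1 delta)" using corr_fold[OF corr0, of ks] by simp
  show ?thesis using Tsum_foldn[of ks N] corr_sum[OF c h] by simp
qed

theorem mainTheorem13:
  fixes p r :: nat
  assumes "r \<ge> 1"
  shows "\<exists>L. Tsum ((if p = 0 then [] else replicate (p - 1) (1, False) @ [(1, True)])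
                    @ replicate (r - 1) (1, False) @ [(1, True)]) \<longlonglongrightarrow> L
           \<and> Tsum (replicate (r - 1) (1, False) @ [(p + 1, True)]) \<longlonglongrightarrow> L"
proof -
  obtain r' where r': "r = Suc r'" using assms by (cases r) auto
  define E where "E = (step sig1 ^^ r) delta"
  have mE: "maj E (8^r * 1)" unfolding E_def by (rule maj_iter[OF maj_delta' abs_sig1])
  have E0: "E 0 = 0" unfolding E_def r' by simp
  define R where "R = replicate (r - 1) (1::nat, False) @ [(p + 1, True)]"
  have lenR: "length R = r" using assms by (simp add: R_def)
  have mR: "mfold R 1 delta = (\<lambda>m. (-1)^r * (E m / real m ^ p))"
    using mfold_R[OF assms, of p] by (simp add: R_def E_def)
  show ?thesis
  proof (cases "p = 0")
    case True
    define c where "c = (step sig1 ^^ r') delta"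
    have mc: "maj c (8^r' * 1)" unfolding c_def by (rule maj_iter[OF maj_delta' abs_sig1])
    have Ec: "E = step sig1 c" by (simp add: E_def c_def r')
    have B: "(\<lambda>M. \<Sum>a\<le>M. step sig1 c a) \<longlonglongrightarrow> suminf (\<lambda>a. c a * KI a 0)" by (rule boundary[OF mc])
    have PS: "(\<lambda>M. \<Sum>m\<le>M. mfold R 1 delta m) \<longlonglongrightarrow> (-1)^r * suminf (\<lambda>a. c a * KI a 0)"
      unfolding mR using tendsto_mult[OF tendsto_const B, of "(-1)^r"] by (simp add: True Ec sum_distrib_left)
    have lim: "Tsum R \<longlonglongrightarrow> 2^r * ((-1)^r * suminf (\<lambda>a. c a * KI a 0))"
      by (rule lim_compose[OF PS, of r]) (simp add: Tsum_eq lenR)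
    have eqL: "(if p = 0 then [] else replicate (p - 1) (1::nat, False) @ [(1, True)]) @ replicate (r - 1) (1, False) @ [(1, True)] = R"
      by (simp add: R_def True)
    show ?thesis unfolding eqL R_def[symmetric] using lim by blast
  next
    case False
    then obtain p' where p': "p = Suc p'" by (cases p) auto
    define A where "A = (step sig0 ^^ Suc p') delta"
    have mA: "maj A (8^Suc p' * 1)" unfolding A_def by (rule maj_iter[OF maj_delta' abs_sig0])
    have A0: "A 0 = 0" unfolding A_def by simp
    define c where "c = (step sig1 ^^ r') A"
    have mc: "maj c (8^r' * (8^Suc p' * 1))" unfolding c_def by (rule maj_iter[OF mA abs_sig1])
    have c0: "c 0 = 0" unfolding c_def by (rule zero_iter[where c=A and w=sig1 and j=r', OF A0])
    define L0 where "L0 = suminf (\<lambda>a. c a * KI a 0)"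
    have B: "(\<lambda>M. \<Sum>a\<le>M. step sig1 c a) \<longlonglongrightarrow> L0" unfolding L0_def by (rule boundary[OF mc])
    have Z1: "Zs c (step sig1 delta) L0" unfolding L0_def by (rule boundary_Z[OF mc c0])
    have Z2: "Zs A ((step sig1 ^^ r') (step sig1 delta)) L0"
      by (rule T1_iter[OF mA maj_step[OF maj_delta' abs_sig1] A0 step_0]) (use Z1 c_def in simp)
    have Z3: "Zs ((step sig0 ^^ Suc p') delta) E L0"
      using Z2 by (simp add: A_def E_def r' funpow_Suc_right del: funpow.simps)
    have Z4: "Zs delta (\<lambda>b. E b / (2 * real b) ^ Suc p') L0" by (rule T0_iter[OF mE E0 Z3])
    have hs: "((\<lambda>b. E b / (2 * real b) ^ p) has_sum L0) UNIV" using Zdelta[OF Z4] by (simp add: p')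
    then have sm: "(\<lambda>b. E b / (2 * real b) ^ p) sums L0" by (rule has_sum_imp_sums)
    have eqE: "(\<lambda>b. E b / real b ^ p) = (\<lambda>b. 2^p * (E b / (2 * real b) ^ p))"
    proof (rule ext)
      fix b
      show "E b / real b ^ p = 2^p * (E b / (2 * real b) ^ p)"
        by (cases "b = 0") (auto simp: E0 power_mult_distrib p')
    qed
    have sm2: "(\<lambda>b. E b / real b ^ p) sums (2^p * L0)" unfolding eqE by (rule sums_mult[OF sm])
    have PSR: "(\<lambda>M. \<Sum>m\<le>M. mfold R 1 delta m) \<longlonglongrightarrow> (-1)^r * (2^p * L0)"
    proof -
      have "(\<lambda>M. \<Sum>m\<le>M. E m / real m ^ p) \<longlonglongrightarrow> 2^p * L0"
        using summable_LIMSEQ'[OF sums_summable[OF sm2]] sums_unique[OF sm2] by simp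
      from tendsto_mult[OF tendsto_const this, of "(-1)^r"] show ?thesis unfolding mR by (simp add: sum_distrib_left)
    qed
    have limR: "Tsum R \<longlonglongrightarrow> 2^r * ((-1)^r * (2^p * L0))"
      by (rule lim_compose[OF PSR, of r]) (simp add: Tsum_eq lenR)
    define Lk where "Lk = replicate p' (1::nat, False) @ [(1, True)] @ replicate (r - 1) (1, False) @ [(1, True)]"
    have eqL: "(if p = 0 then [] else replicate (p - 1) (1::nat, False) @ [(1, True)]) @ replicate (r - 1) (1, False) @ [(1, True)] = Lk"
      by (simp add: Lk_def p')
    have lenL: "length Lk = p + r" using assms by (simp add: Lk_def p')
    have mL: "mfold Lk 1 delta = (\<lambda>m. (-1)^r * (step sig1 ^^ r) A m)"
      unfolding Lk_def A_def by (rule mfold_L[OF assms])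
    have PSL: "(\<lambda>M. \<Sum>m\<le>M. mfold Lk 1 delta m) \<longlonglongrightarrow> (-1)^r * L0"
    proof -
      have "(step sig1 ^^ r) A = step sig1 c" by (simp add: c_def r')
      then show ?thesis unfolding mL using tendsto_mult[OF tendsto_const B, of "(-1)^r"] by (simp add: sum_distrib_left)
    qed
    have limL: "Tsum Lk \<longlonglongrightarrow> 2^(p + r) * ((-1)^r * L0)"
      by (rule lim_compose[OF PSL, of "p + r"]) (simp add: Tsum_eq lenL)
    have eqc: "2^(p + r) * ((-1)^r * L0) = 2^r * ((-1)^r * (2^p * (L0::real)))" by (simp add: power_add)
    have limL': "Tsum Lk \<longlonglongrightarrow> 2^r * ((-1)^r * (2^p * L0))" using limL unfolding eqc .
    show ?thesis unfolding eqL R_def[symmetric] using limL' limR by blast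
  qed
qed


end
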